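(* Let $\Sigma$ be a signature and $\equiv$ an operad congruence of $T(\Sigma)$ which is compatible with the degree and of finite type. Then the linear map $\phi:\mathbf N(T(\Sigma)/_\equiv)\to\mathbf N(T(\Sigma))$ defined, for every reduced word $x$ on $T(\Sigma)/_\equiv$, by $$\phi(E_x)=\sum_{f\text{ reduced }\Sigma\text{-forest}}[\pi_\equiv(f)=x]\;E_f$$ is a well-defined injective Hopf algebra morphism.
   Context: $\mathbb K$ is a field of characteristic zero; $[P]$ is $1$ if $P$ holds and $0$ otherwise. A signature is a set $\Sigma$ with an arity map $|\cdot|:\Sigma\to\mathbb N$; $\Sigma(n)$ is the set of elements of arity $n$. A $\Sigma$-term is either the leaf $\bot$ or $s(t_1,\dots,t_n)$ with $s\in\Sigma(n)$ and $\Sigma$-terms $t_i$; its degree is the number of internal nodes, its arity $|t|$ the number of leaves. $T(\Sigma)$ is the free nonsymmetric operad on $\Sigma$ (composition $t[t_1,\dots,t_{|t|}]$ grafts $t_i$ onto the $i$-th leaf of $t$, partial composition $\circ_i$ grafts onto the $i$-th leaf, unit $\bot$). A $\Sigma$-forest is a finite word of terms; it is reduced if no term is $\bot$. An operad congruence of $T(\Sigma)$ is an equivalence relation $\equiv$ such that $t\equiv t'$ implies $|t|=|t'|$, $t\circ_i s\equiv t'\circ_i s$ and $s\circ_j t\equiv s\circ_j t'$ for all $s$ and valid $i,j$. It is compatible with the degree if $t\equiv t'$ implies $\deg t=\deg t'$, and of finite type if all classes are finite. $\pi_\equiv:T(\Sigma)\to T(\Sigma)/_\equiv$ is the canonical projection,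 extended letterwise to words: $\pi_\equiv(t_1\cdots t_k)=\pi_\equiv(t_1)\cdots\pi_\equiv(t_k)$. Natural Hopf algebra: for a nonsymmetric operad $\mathcal O$ with unit $1$ which is finitely factorizable (each $x$ has finitely many factorizations $x=y[y'_1,\dots,y'_{|y|}]$) and has a grading $\deg$ ($\deg^{-1}(0)=\{1\}$, additive under composition), $\mathbf N(\mathcal O)$ is the vector space with basis $E_w$ indexed by words $w$ on $\mathcal O\setminus\{1\}$ (reduced words), with product $E_{w_1}E_{w_2}=E_{w_1w_2}$ and coproduct the unique algebra morphism with $\Delta E_x=\sum_{y\in\mathcal O}\sum_{(y'_1,\dots,y'_{|y|})}[x=y[y'_1,\dots,y'_{|y|}]]\,E_{\mathrm{rd}(y)}\otimes E_{\mathrm{rd}(y'_1\cdots y'_{|y|})}$ for $x\in\mathcal O$, where $\mathrm{rd}$ deletes the letters equal to $1$ from a word; it is a graded Hopf algebra. Under the hypotheses, $T(\Sigma)/_\equiv$ is finitely factorizable and graded by the degree of representatives, so $\mathbf N(T(\Sigma)/_\equiv)$ is defined; $\mathbf N(T(\Sigma))$ has basis $E_f$ indexed by reduced $\Sigma$-forests. *)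

theory Defs
  imports Main
begin

datatype 'f sterm = Bot | Node 'f "'f sterm list"

inductive wf_term :: "'f set \<Rightarrow> ('f \<Rightarrow> nat) \<Rightarrow> 'f sterm \<Rightarrow> bool" for S ar where
  wf_Bot: "wf_term S ar Bot"
| wf_Node: "s \<in> S \<Longrightarrow> length ts = ar s \<Longrightarrow> (\<forall>t\<in>set ts. wf_term S ar t)
            \<Longrightarrow> wf_term S ar (Node s ts)"

definition terms :: "'f set \<Rightarrow> ('f \<Rightarrow> nat) \<Rightarrow> 'f sterm set" where
  "terms S ar = {t. wf_term S ar t}"

fun tarity :: "'f sterm \<Rightarrow> nat" where
  "tarity Bot = 1"
| "tarity (Node f ts) = sum_list (map tarity ts)"

fun tdeg :: "'f sterm \<Rightarrow> nat" where
  "tdeg Bot = 0"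
| "tdeg (Node f ts) = 1 + sum_list (map tdeg ts)"

text \<open>Full composition t[t_1,...,t_n]: graft the i-th term of the list on the i-th leaf.\<close>
fun tcomp :: "'f sterm \<Rightarrow> 'f sterm list \<Rightarrow> 'f sterm"
and tcomp_list :: "'f sterm list \<Rightarrow> 'f sterm list \<Rightarrow> 'f sterm list" where
  "tcomp Bot ss = (case ss of [] \<Rightarrow> Bot | s # _ \<Rightarrow> s)"
| "tcomp (Node f ts) ss = Node f (tcomp_list ts ss)"
| "tcomp_list [] ss = []"
| "tcomp_list (t # ts) ss = tcomp t (take (tarity t) ss) # tcomp_list ts (drop (tarity t) ss)"

text \<open>Partial composition t \<circ>_i s (1 \<le> i \<le> |t|): graft s on the i-th leaf of t.\<close>
definition pcomp :: "'f sterm \<Rightarrow> nat \<Rightarrow> 'f sterm \<Rightarrow> 'f sterm" where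
  "pcomp t i s = tcomp t (replicate (i - 1) Bot @ [s] @ replicate (tarity t - i) Bot)"

definition operad_congruence :: "'f set \<Rightarrow> ('f \<Rightarrow> nat) \<Rightarrow> ('f sterm \<times> 'f sterm) set \<Rightarrow> bool" where
  "operad_congruence S ar R \<longleftrightarrow>
     equiv (terms S ar) R \<and>
     (\<forall>(t, t') \<in> R. tarity t = tarity t') \<and>
     (\<forall>(t, t') \<in> R. \<forall>s \<in> terms S ar.
        (\<forall>i. 1 \<le> i \<and> i \<le> tarity t \<longrightarrow> (pcomp t i s, pcomp t' i s) \<in> R) \<and>
        (\<forall>j. 1 \<le> j \<and> j \<le> tarity s \<longrightarrow> (pcomp s j t, pcomp s j t') \<in> R))"

definition degree_compatible :: "('f sterm \<times> 'f sterm) set \<Rightarrow> bool" where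
  "degree_compatible R \<longleftrightarrow> (\<forall>(t, t') \<in> R. tdeg t = tdeg t')"

definition finite_type :: "'f set \<Rightarrow> ('f \<Rightarrow> nat) \<Rightarrow> ('f sterm \<times> 'f sterm) set \<Rightarrow> bool" where
  "finite_type S ar R \<longleftrightarrow> (\<forall>X \<in> terms S ar // R. finite X)"

definition qproj :: "('f sterm \<times> 'f sterm) set \<Rightarrow> 'f sterm \<Rightarrow> 'f sterm set" where
  "qproj R t = R `` {t}"

definition qrep :: "'f sterm set \<Rightarrow> 'f sterm" where
  "qrep X = (SOME t. t \<in> X)"

definition qarity :: "'f sterm set \<Rightarrow> nat" where
  "qarity X = tarity (qrep X)"

definition qcomp :: "('f sterm \<times> 'f sterm) set \<Rightarrow> 'f sterm set \<Rightarrow> 'f sterm set list \<Rightarrow> 'f sterm set" where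
  "qcomp R X Ys = qproj R (tcomp (qrep X) (map qrep Ys))"

text \<open>Vectors are finitely supported functions from words to the field; the basis vector
  E_w is basis w.  Elements of the tensor square are functions on pairs of words.\<close>

definition supp :: "('a \<Rightarrow> 'k::zero) \<Rightarrow> 'a set" where
  "supp a = {x. a x \<noteq> 0}"

definition basis :: "'a \<Rightarrow> 'a \<Rightarrow> 'k::{zero,one}" where
  "basis w = (\<lambda>v. if v = w then 1 else 0)"

definition lin_ext :: "('a \<Rightarrow> 'b \<Rightarrow> 'k::comm_ring_1) \<Rightarrow> ('a \<Rightarrow> 'k) \<Rightarrow> 'b \<Rightarrow> 'k" where
  "lin_ext g a = (\<lambda>v. \<Sum>u\<in>supp a. a u * g u v)"

definition red_words :: "'o set \<Rightarrow> 'o \<Rightarrow> 'o list set" where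
  "red_words C e = {w. set w \<subseteq> C \<and> e \<notin> set w}"

definition rd :: "'o \<Rightarrow> 'o list \<Rightarrow> 'o list" where
  "rd e w = filter (\<lambda>x. x \<noteq> e) w"

definition Nspace :: "'o set \<Rightarrow> 'o \<Rightarrow> ('o list \<Rightarrow> 'k::comm_ring_1) set" where
  "Nspace C e = {a. finite (supp a) \<and> supp a \<subseteq> red_words C e}"

definition Nmult :: "('o list \<Rightarrow> 'k::comm_ring_1) \<Rightarrow> ('o list \<Rightarrow> 'k) \<Rightarrow> 'o list \<Rightarrow> 'k" where
  "Nmult a b = (\<lambda>w. \<Sum>u\<in>supp a. \<Sum>v\<in>supp b. if u @ v = w then a u * b v else 0)"

definition Nunit :: "'o list \<Rightarrow> 'k::comm_ring_1" where
  "Nunit = basis []"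

definition Ncounit :: "('o list \<Rightarrow> 'k::comm_ring_1) \<Rightarrow> 'k" where
  "Ncounit a = a []"

definition Tmult :: "('o list \<times> 'o list \<Rightarrow> 'k::comm_ring_1) \<Rightarrow> ('o list \<times> 'o list \<Rightarrow> 'k)
                     \<Rightarrow> 'o list \<times> 'o list \<Rightarrow> 'k" where
  "Tmult a b = (\<lambda>w. \<Sum>u\<in>supp a. \<Sum>v\<in>supp b.
                   if (fst u @ fst v, snd u @ snd v) = w then a u * b v else 0)"

definition tensor :: "('a \<Rightarrow> 'k::comm_ring_1) \<Rightarrow> ('b \<Rightarrow> 'k) \<Rightarrow> 'a \<times> 'b \<Rightarrow> 'k" where
  "tensor a b = (\<lambda>(u, v). a u * b v)"

definition tensor_map :: "(('a \<Rightarrow> 'k::comm_ring_1) \<Rightarrow> ('c \<Rightarrow> 'k)) \<Rightarrow> (('b \<Rightarrow> 'k) \<Rightarrow> ('d \<Rightarrow> 'k))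
                          \<Rightarrow> ('a \<times> 'b \<Rightarrow> 'k) \<Rightarrow> 'c \<times> 'd \<Rightarrow> 'k" where
  "tensor_map F G t = lin_ext (\<lambda>(u, v). tensor (F (basis u)) (G (basis v))) t"

definition factorizations :: "'o set \<Rightarrow> ('o \<Rightarrow> nat) \<Rightarrow> ('o \<Rightarrow> 'o list \<Rightarrow> 'o) \<Rightarrow> 'o \<Rightarrow> ('o \<times> 'o list) set" where
  "factorizations C ar cp x =
     {(y, ys). y \<in> C \<and> set ys \<subseteq> C \<and> length ys = ar y \<and> cp y ys = x}"

definition Delta_gen :: "'o set \<Rightarrow> ('o \<Rightarrow> nat) \<Rightarrow> ('o \<Rightarrow> 'o list \<Rightarrow> 'o) \<Rightarrow> 'o \<Rightarrow> 'o
                         \<Rightarrow> 'o list \<times> 'o list \<Rightarrow> 'k::comm_ring_1" where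
  "Delta_gen C ar cp e x = (\<lambda>p. \<Sum>q\<in>factorizations C ar cp x.
      if (rd e [fst q], rd e (snd q)) = p then 1 else 0)"

text \<open>Coproduct of E_w, as the unique algebra morphism extending Delta_gen.\<close>
definition Delta_word :: "'o set \<Rightarrow> ('o \<Rightarrow> nat) \<Rightarrow> ('o \<Rightarrow> 'o list \<Rightarrow> 'o) \<Rightarrow> 'o \<Rightarrow> 'o list
                          \<Rightarrow> 'o list \<times> 'o list \<Rightarrow> 'k::comm_ring_1" where
  "Delta_word C ar cp e w = foldr (\<lambda>x acc. Tmult (Delta_gen C ar cp e x) acc) w (basis ([], []))"

definition Ncoprod :: "'o set \<Rightarrow> ('o \<Rightarrow> nat) \<Rightarrow> ('o \<Rightarrow> 'o list \<Rightarrow> 'o) \<Rightarrow> 'o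
                       \<Rightarrow> ('o list \<Rightarrow> 'k::comm_ring_1) \<Rightarrow> 'o list \<times> 'o list \<Rightarrow> 'k" where
  "Ncoprod C ar cp e = lin_ext (Delta_word C ar cp e)"

text \<open>A linear map between the connected graded Hopf algebras N(O1) and N(O2) preserving
  product, unit, coproduct and counit (a bialgebra morphism between Hopf algebras,
  hence automatically compatible with the antipodes).\<close>
definition N_hopf_morphism ::
  "'o set \<Rightarrow> ('o \<Rightarrow> nat) \<Rightarrow> ('o \<Rightarrow> 'o list \<Rightarrow> 'o) \<Rightarrow> 'o \<Rightarrow>
   'p set \<Rightarrow> ('p \<Rightarrow> nat) \<Rightarrow> ('p \<Rightarrow> 'p list \<Rightarrow> 'p) \<Rightarrow> 'p \<Rightarrow>
   (('o list \<Rightarrow> 'k::field) \<Rightarrow> ('p list \<Rightarrow> 'k)) \<Rightarrow> bool" where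
  "N_hopf_morphism C1 ar1 cp1 e1 C2 ar2 cp2 e2 \<phi> \<longleftrightarrow>
     (\<forall>a \<in> Nspace C1 e1. \<phi> a \<in> Nspace C2 e2) \<and>
     (\<forall>a \<in> Nspace C1 e1. \<forall>b \<in> Nspace C1 e1. \<phi> (\<lambda>w. a w + b w) = (\<lambda>w. \<phi> a w + \<phi> b w)) \<and>
     (\<forall>a \<in> Nspace C1 e1. \<forall>c. \<phi> (\<lambda>w. c * a w) = (\<lambda>w. c * \<phi> a w)) \<and>
     (\<forall>a \<in> Nspace C1 e1. \<forall>b \<in> Nspace C1 e1. \<phi> (Nmult a b) = Nmult (\<phi> a) (\<phi> b)) \<and>
     \<phi> Nunit = Nunit \<and>
     (\<forall>a \<in> Nspace C1 e1. Ncoprod C2 ar2 cp2 e2 (\<phi> a)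
                         = tensor_map \<phi> \<phi> (Ncoprod C1 ar1 cp1 e1 a)) \<and>
     (\<forall>a \<in> Nspace C1 e1. Ncounit (\<phi> a) = Ncounit a)"

definition fiber_forests :: "'f set \<Rightarrow> ('f \<Rightarrow> nat) \<Rightarrow> ('f sterm \<times> 'f sterm) set
                             \<Rightarrow> 'f sterm set list \<Rightarrow> 'f sterm list set" where
  "fiber_forests S ar R x = {f. f \<in> red_words (terms S ar) Bot \<and> map (qproj R) f = x}"

definition phi :: "'f set \<Rightarrow> ('f \<Rightarrow> nat) \<Rightarrow> ('f sterm \<times> 'f sterm) set
                   \<Rightarrow> ('f sterm set list \<Rightarrow> 'k::field) \<Rightarrow> 'f sterm list \<Rightarrow> 'k" where
  "phi S ar R = lin_ext (\<lambda>x. \<lambda>f. \<Sum>g\<in>fiber_forests S ar R x. basis g f)"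

end

theory Submission
  imports Defs
begin

lemma length_tcomp_list[simp]: "length (tcomp_list ts ss) = length ts"
  by (induction ts arbitrary: ss) auto

lemma tcomp_prefix:
  shows "tarity t \<le> n \<longrightarrow> tcomp t (take n rs) = tcomp t rs"
  and "sum_list (map tarity ts) \<le> n \<longrightarrow> tcomp_list ts (take n rs) = tcomp_list ts rs"
proof (induction t rs and ts rs arbitrary: n and n rule: tcomp_tcomp_list.induct)
  case (1 ss)
  then show ?case by (cases ss; cases n) auto
next
  case (2 f ts ss)
  then show ?case by auto
next
  case (3 ss)
  then show ?case by auto
next
  case (4 t ts ss)
  show ?case
  proof
    assume a: "sum_list (map tarity (t # ts)) \<le> n"
    have "tcomp t (take (tarity t) (take n ss)) = tcomp t (take (tarity t) ss)"
      using a by (simp add: min_def)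
    moreover have "tcomp_list ts (drop (tarity t) (take n ss)) = tcomp_list ts (drop (tarity t) ss)"
      using 4(2)[of "n - tarity t"] a by (simp add: drop_take)
    ultimately show "tcomp_list (t # ts) (take n ss) = tcomp_list (t # ts) ss" by simp
  qed
qed

lemma take_tcomp_list: "take a (tcomp_list ss rs) = tcomp_list (take a ss) rs"
  by (induction ss arbitrary: a rs) (auto simp: take_Cons')

lemma drop_tcomp_list:
  "drop a (tcomp_list ss rs) = tcomp_list (drop a ss) (drop (sum_list (map tarity (take a ss))) rs)"
  by (induction ss arbitrary: a rs) (simp_all add: drop_Cons' take_Cons' drop_drop ac_simps)

lemma tcomp_list_append:
  "tcomp_list (xs @ ys) rs = tcomp_list xs rs @ tcomp_list ys (drop (sum_list (map tarity xs)) rs)"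
  by (induction xs arbitrary: rs) (simp_all add: drop_drop ac_simps)

lemma tarity_tcomp:
  shows "length ss = tarity t \<longrightarrow> tarity (tcomp t ss) = sum_list (map tarity ss)"
  and "length ss = sum_list (map tarity ts) \<longrightarrow>
      sum_list (map tarity (tcomp_list ts ss)) = sum_list (map tarity ss)"
proof (induction t ss and ts ss rule: tcomp_tcomp_list.induct)
  case (1 ss)
  then show ?case by (cases ss) auto
next
  case (2 f ts ss)
  then show ?case by auto
next
  case (3 ss)
  then show ?case by auto
next
  case (4 t ts ss)
  show ?case
  proof
    assume a: "length ss = sum_list (map tarity (t # ts))"
    have "sum_list (map tarity ss) = sum_list (map tarity (take (tarity t) ss)) + sum_list (map tarity (drop (tarity t) ss))"
      by (metis append_take_drop_id map_append sum_list_append)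
    then show "sum_list (map tarity (tcomp_list (t # ts) ss)) = sum_list (map tarity ss)"
      using 4 a by simp
  qed
qed

lemma tarity_tcomp'[simp]: "length ss = tarity t \<Longrightarrow> tarity (tcomp t ss) = sum_list (map tarity ss)"
  using tarity_tcomp by blast

lemma tcomp_unit:
  shows "ss = replicate (tarity t) Bot \<longrightarrow> tcomp t ss = t"
  and "ss = replicate (sum_list (map tarity ts)) Bot \<longrightarrow> tcomp_list ts ss = ts"
proof (induction t ss and ts ss rule: tcomp_tcomp_list.induct)
  case (4 t ts ss)
  then show ?case by (auto simp: drop_replicate)
qed auto

lemma tcomp_unit'[simp]: "tcomp t (replicate (tarity t) Bot) = t"
  and tcomp_list_unit[simp]: "tcomp_list ts (replicate (sum_list (map tarity ts)) Bot) = ts"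
  using tcomp_unit by blast+

lemma tcomp_assoc:
  shows "length ss = tarity t \<longrightarrow> length rs = sum_list (map tarity ss) \<longrightarrow>
      tcomp (tcomp t ss) rs = tcomp t (tcomp_list ss rs)"
  and "length ss = sum_list (map tarity ts) \<longrightarrow> length rs = sum_list (map tarity ss) \<longrightarrow>
      tcomp_list (tcomp_list ts ss) rs = tcomp_list ts (tcomp_list ss rs)"
proof (induction t ss and ts ss arbitrary: rs and rs rule: tcomp_tcomp_list.induct)
  case (1 ss)
  then show ?case
    by (cases ss) (auto simp: tcomp_prefix(1)[rule_format, of _ "length rs" rs for rs, simplified])
next
  case (2 f ts ss)
  then show ?case by auto
next
  case (3 ss)
  then show ?case by auto
next
  case (4 t ts ss)
  show ?case
  proof (intro impI)
    assume a: "length ss = sum_list (map tarity (t # ts))" and b: "length rs = sum_list (map tarity ss)"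
    define A where "A = tarity t"
    define B where "B = sum_list (map tarity (take A ss))"
    have la: "length (take A ss) = A" using a by (simp add: A_def)
    have sB: "sum_list (map tarity ss) = B + sum_list (map tarity (drop A ss))"
      unfolding B_def by (metis append_take_drop_id map_append sum_list_append)
    have ar1: "tarity (tcomp t (take A ss)) = B" using la by (simp add: A_def B_def)
    have e1: "tcomp (tcomp t (take A ss)) (take B rs) = tcomp t (tcomp_list (take A ss) (take B rs))"
      using 4(1)[of "take B rs"] la b sB by (simp add: A_def B_def)
    have e2: "tcomp_list (tcomp_list ts (drop A ss)) (drop B rs) = tcomp_list ts (tcomp_list (drop A ss) (drop B rs))"
      using 4(2)[of "drop B rs"] a b sB by (simp add: A_def)
    have e3: "tcomp_list (take A ss) (take B rs) = tcomp_list (take A ss) rs"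
      using tcomp_prefix(2)[rule_format, of "take A ss" B rs] by (simp add: B_def)
    show "tcomp_list (tcomp_list (t # ts) ss) rs = tcomp_list (t # ts) (tcomp_list ss rs)"
      using e1 e2 e3 ar1
      by (simp add: A_def[symmetric] take_tcomp_list drop_tcomp_list B_def[symmetric])
  qed
qed

lemma tcomp_assoc':
  "length ss = tarity t \<Longrightarrow> length rs = sum_list (map tarity ss) \<Longrightarrow>
      tcomp (tcomp t ss) rs = tcomp t (tcomp_list ss rs)"
  using tcomp_assoc by blast


lemma wf_Node_iff[simp]:
  "wf_term S ar (Node f ts) \<longleftrightarrow> f \<in> S \<and> length ts = ar f \<and> (\<forall>t\<in>set ts. wf_term S ar t)"
proof
  assume "wf_term S ar (Node f ts)"
  then show "f \<in> S \<and> length ts = ar f \<and> (\<forall>t\<in>set ts. wf_term S ar t)"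
    by (cases rule: wf_term.cases) auto
qed (auto intro: wf_Node)

lemma wf_tcomp:
  shows "wf_term S ar t \<longrightarrow> (\<forall>s\<in>set ss. wf_term S ar s) \<longrightarrow> wf_term S ar (tcomp t ss)"
  and "(\<forall>t\<in>set ts. wf_term S ar t) \<longrightarrow> (\<forall>s\<in>set ss. wf_term S ar s) \<longrightarrow>
         (\<forall>u\<in>set (tcomp_list ts ss). wf_term S ar u)"
proof (induction t ss and ts ss rule: tcomp_tcomp_list.induct)
  case (1 ss)
  show ?case
  proof (cases ss)
    case Nil
    then show ?thesis by (simp add: wf_Bot)
  next
    case (Cons a list)
    then show ?thesis by simp
  qed
next
  case (2 f ts ss)
  show ?case
  proof (intro impI)
    assume a: "wf_term S ar (Node f ts)" "\<forall>s\<in>set ss. wf_term S ar s"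
    then have "\<forall>u\<in>set (tcomp_list ts ss). wf_term S ar u" using 2 by simp
    then show "wf_term S ar (tcomp (Node f ts) ss)" using a(1) by simp
  qed
next
  case (3 ss)
  show ?case by simp
next
  case (4 t ts ss)
  show ?case
  proof (intro impI)
    assume a: "\<forall>t\<in>set (t # ts). wf_term S ar t" "\<forall>s\<in>set ss. wf_term S ar s"
    have "set (take (tarity t) ss) \<subseteq> set ss" "set (drop (tarity t) ss) \<subseteq> set ss"
      by (rule set_take_subset, rule set_drop_subset)
    then have b: "\<forall>s\<in>set (take (tarity t) ss). wf_term S ar s" "\<forall>s\<in>set (drop (tarity t) ss). wf_term S ar s"
      using a(2) by blast+
    have "wf_term S ar (tcomp t (take (tarity t) ss))" using 4(1) a(1) b(1) by simp
    moreover have "\<forall>u\<in>set (tcomp_list ts (drop (tarity t) ss)). wf_term S ar u"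
      using 4(2) a(1) b(2) by simp
    ultimately show "\<forall>u\<in>set (tcomp_list (t # ts) ss). wf_term S ar u" by simp
  qed
qed

lemma wf_tcomp'[intro]: "wf_term S ar t \<Longrightarrow> (\<forall>s\<in>set ss. wf_term S ar s) \<Longrightarrow> wf_term S ar (tcomp t ss)"
  using wf_tcomp(1) by blast

lemma tcomp_replace:
  assumes l: "length ss = tarity t" and i: "i < length ss" and b: "ss ! i = Bot"
  shows "tcomp t (ss[i := s]) = pcomp (tcomp t ss) (sum_list (map tarity (take i ss)) + 1) s"
proof -
  define a where "a = sum_list (map tarity (take i ss))"
  define D where "D = drop (Suc i) ss"
  have ss: "ss = take i ss @ Bot # D" unfolding D_def using i b
    by (metis id_take_nth_drop)
  have sss: "sum_list (map tarity ss) = a + 1 + sum_list (map tarity D)"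
    by (subst ss) (simp add: a_def)
  define P where "P = replicate a Bot @ [s] @ replicate (sum_list (map tarity D)) Bot"
  have pc: "pcomp (tcomp t ss) (a + 1) s = tcomp (tcomp t ss) P"
    unfolding pcomp_def P_def using l sss by simp
  have lP: "length P = sum_list (map tarity ss)" using sss by (simp add: P_def)
  have "tcomp_list ss P = take i ss @ s # D"
  proof -
    have "tcomp_list ss P = tcomp_list (take i ss) P @ tcomp_list (Bot # D) (drop a P)"
      by (subst ss) (simp only: tcomp_list_append a_def)
    also have "tcomp_list (take i ss) P = tcomp_list (take i ss) (take a P)"
      using tcomp_prefix(2)[rule_format, of "take i ss" a P] by (simp add: a_def)
    also have "take a P = replicate (sum_list (map tarity (take i ss))) Bot"
      by (simp add: P_def a_def)
    also have "drop a P = s # replicate (sum_list (map tarity D)) Bot"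
      by (simp add: P_def)
    finally show ?thesis by simp
  qed
  also have "take i ss @ s # D = ss[i := s]"
    unfolding D_def using i by (simp add: upd_conv_take_nth_drop)
  finally show ?thesis using pc tcomp_assoc'[OF l lP] by (simp add: a_def)
qed


lemma finite_list_all2:
  "(\<forall>x\<in>set u. finite {t. P t x}) \<Longrightarrow> finite {f. list_all2 P f u}"
proof (induction u)
  case Nil
  then show ?case by simp
next
  case (Cons x u)
  have "{f. list_all2 P f (x # u)} = (\<lambda>(a, b). a # b) ` ({t. P t x} \<times> {f. list_all2 P f u})"
    by (auto simp: list_all2_Cons2)
  then show ?case using Cons by simp
qed

lemma tcomp_list_decomp:
  "length ys = sum_list (map tarity us) \<Longrightarrow>
   \<exists>ps. map fst ps = us \<and> concat (map snd ps) = ys \<and>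
        list_all2 (\<lambda>p t. length (snd p) = tarity (fst p) \<and> tcomp (fst p) (snd p) = t) ps (tcomp_list us ys)"
proof (induction us arbitrary: ys)
  case Nil
  then show ?case by simp
next
  case (Cons u us)
  from Cons.prems have "length (drop (tarity u) ys) = sum_list (map tarity us)" by simp
  from Cons.IH[OF this] obtain ps where ps: "map fst ps = us" "concat (map snd ps) = drop (tarity u) ys"
    "list_all2 (\<lambda>p t. length (snd p) = tarity (fst p) \<and> tcomp (fst p) (snd p) = t) ps
        (tcomp_list us (drop (tarity u) ys))" by blast
  show ?case
    by (rule exI[of _ "(u, take (tarity u) ys) # ps"]) (use ps Cons.prems in auto)
qed

lemma finite_facts: "finite {(y, ys). length ys = tarity y \<and> tcomp y ys = t}"
proof (induction t)
  case Bot
  have "{(y, ys). length ys = tarity y \<and> tcomp y ys = Bot} \<subseteq> {(Bot, [Bot])}"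
  proof (clarify)
    fix y ys assume a: "length ys = tarity y" "tcomp y ys = Bot"
    then show "y = Bot \<and> ys = [Bot]"
      by (cases y; cases ys) auto
  qed
  then show ?case by (rule finite_subset) simp
next
  case (Node f ts)
  let ?F = "\<lambda>t. {(y, ys). length ys = tarity y \<and> tcomp y ys = t}"
  have "?F (Node f ts) \<subseteq> {(Bot, [Node f ts])} \<union>
          (\<lambda>ps. (Node f (map fst ps), concat (map snd ps))) ` {ps. list_all2 (\<lambda>p t. p \<in> ?F t) ps ts}"
  proof (clarify)
    fix y ys assume a: "length ys = tarity y" "tcomp y ys = Node f ts"
      and n: "(y, ys) \<notin> (\<lambda>ps. (Node f (map fst ps), concat (map snd ps))) ` {ps. list_all2 (\<lambda>p t. p \<in> ?F t) ps ts}"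
    show "y = Bot \<and> ys = [Node f ts]"
    proof (cases y)
      case Bot
      then show ?thesis using a by (cases ys) auto
    next
      case (Node g us)
      with a have g: "g = f" "tcomp_list us ys = ts" "length ys = sum_list (map tarity us)" by auto
      from tcomp_list_decomp[OF g(3)] obtain ps where ps: "map fst ps = us" "concat (map snd ps) = ys"
        "list_all2 (\<lambda>p t. length (snd p) = tarity (fst p) \<and> tcomp (fst p) (snd p) = t) ps (tcomp_list us ys)"
        by blast
      have "list_all2 (\<lambda>p t. p \<in> ?F t) ps ts"
        using ps(3) g(2) by (auto elim: list_all2_mono)
      then have False using n ps Node g by auto
      then show ?thesis ..
    qed
  qed
  moreover have "finite {ps. list_all2 (\<lambda>p t. p \<in> ?F t) ps ts}"
    by (rule finite_list_all2) (use Node in simp)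
  ultimately show ?case by (meson finite.emptyI finite_Un finite_imageI finite_insert finite_subset)
qed


locale qset =
  fixes S :: "'f set" and ar :: "'f \<Rightarrow> nat" and R :: "('f sterm \<times> 'f sterm) set"
  assumes cong: "operad_congruence S ar R"
    and degc: "degree_compatible R"
    and fty: "finite_type S ar R"
begin

abbreviation "TT \<equiv> terms S ar"
abbreviation "C1 \<equiv> TT // R"
abbreviation "pi \<equiv> qproj R"
abbreviation "e1 \<equiv> qproj R Bot"
abbreviation "RF \<equiv> red_words TT Bot"

lemma equivR: "equiv TT R"
  using cong unfolding operad_congruence_def by blast

lemma R_sub: "(a, b) \<in> R \<Longrightarrow> a \<in> TT \<and> b \<in> TT"
  using equivR unfolding equiv_def refl_on_def by blast

lemma R_refl: "a \<in> TT \<Longrightarrow> (a, a) \<in> R"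
  using equivR unfolding equiv_def refl_on_def by blast

lemma R_sym: "(a, b) \<in> R \<Longrightarrow> (b, a) \<in> R"
  using equivR unfolding equiv_def by (meson symD)

lemma R_trans: "(a, b) \<in> R \<Longrightarrow> (b, c) \<in> R \<Longrightarrow> (a, c) \<in> R"
  using equivR unfolding equiv_def by (meson transD)

lemma R_arity: "(a, b) \<in> R \<Longrightarrow> tarity a = tarity b"
  using cong unfolding operad_congruence_def by blast

lemma R_deg: "(a, b) \<in> R \<Longrightarrow> tdeg a = tdeg b"
  using degc unfolding degree_compatible_def by blast

lemma R_left: "(t, t') \<in> R \<Longrightarrow> s \<in> TT \<Longrightarrow> 1 \<le> i \<Longrightarrow> i \<le> tarity t \<Longrightarrow> (pcomp t i s, pcomp t' i s) \<in> R"
  using cong unfolding operad_congruence_def by blast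

lemma R_right: "(t, t') \<in> R \<Longrightarrow> s \<in> TT \<Longrightarrow> 1 \<le> j \<Longrightarrow> j \<le> tarity s \<Longrightarrow> (pcomp s j t, pcomp s j t') \<in> R"
  using cong unfolding operad_congruence_def by blast

lemma Bot_T[simp]: "Bot \<in> TT"
  by (simp add: terms_def wf_Bot)

lemma tcomp_T[intro]: "t \<in> TT \<Longrightarrow> set ss \<subseteq> TT \<Longrightarrow> tcomp t ss \<in> TT"
  unfolding terms_def by auto

lemma pi_C1[intro]: "t \<in> TT \<Longrightarrow> pi t \<in> C1"
  by (simp add: qproj_def quotientI)

lemma in_pi: "t \<in> TT \<Longrightarrow> t \<in> pi t"
  by (simp add: qproj_def R_refl)

lemma pi_eq_iff: "t \<in> TT \<Longrightarrow> t' \<in> TT \<Longrightarrow> pi t = pi t' \<longleftrightarrow> (t, t') \<in> R"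
  unfolding qproj_def using equivR by (simp add: equiv_class_eq_iff)

lemma class_eq: "X \<in> C1 \<Longrightarrow> t \<in> X \<Longrightarrow> pi t = X"
  unfolding qproj_def using equivR by (metis Image_singleton_iff equiv_class_eq quotientE)

lemma class_sub: "X \<in> C1 \<Longrightarrow> X \<subseteq> TT"
  by (auto elim!: quotientE dest: R_sub)

lemma class_ne: "X \<in> C1 \<Longrightarrow> X \<noteq> {}"
  using equivR by (metis in_quotient_imp_non_empty)

lemma qrep_in: "X \<in> C1 \<Longrightarrow> qrep X \<in> X"
  unfolding qrep_def using class_ne by (metis ex_in_conv someI_ex)

lemma pi_qrep: "X \<in> C1 \<Longrightarrow> pi (qrep X) = X"
  using class_eq qrep_in by blast

lemma class_finite: "X \<in> C1 \<Longrightarrow> finite X"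
  using fty unfolding finite_type_def by blast

lemma class_R: "X \<in> C1 \<Longrightarrow> a \<in> X \<Longrightarrow> b \<in> X \<Longrightarrow> (a, b) \<in> R"
  by (metis class_eq class_sub pi_eq_iff subsetD)

lemma qarity_eq: "X \<in> C1 \<Longrightarrow> t \<in> X \<Longrightarrow> qarity X = tarity t"
  unfolding qarity_def using qrep_in class_R R_arity by blast

lemma e1_eq: "e1 = {Bot}"
proof -
  have "(Bot, t) \<in> R \<Longrightarrow> t = Bot" for t
    using R_deg[of Bot t] by (cases t) auto
  then show ?thesis unfolding qproj_def using R_refl[of Bot] by auto
qed

lemma pi_e1_iff: "t \<in> TT \<Longrightarrow> pi t = e1 \<longleftrightarrow> t = Bot"
  using e1_eq in_pi by auto

lemma e1_C1[simp]: "e1 \<in> C1" by auto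

end

context qset begin

lemma tcomp_cong:
  assumes tt: "(t, t') \<in> R" and l: "length ss = tarity t"
    and ss: "list_all2 (\<lambda>a b. (a, b) \<in> R) ss ss'"
  shows "(tcomp t ss, tcomp t' ss') \<in> R"
proof -
  define n where "n = tarity t"
  have n': "tarity t' = n" using R_arity[OF tt] n_def by simp
  have lss': "length ss' = n" using ss l n_def list_all2_lengthD by fastforce
  have sT: "set ss \<subseteq> TT" "set ss' \<subseteq> TT"
    using ss R_sub by (fastforce simp: list_all2_conv_all_nth in_set_conv_nth)+
  have tT: "t \<in> TT" "t' \<in> TT" using R_sub[OF tt] by auto
  have ar: "\<forall>j<n. tarity (ss ! j) = tarity (ss' ! j)"
    using ss l n_def by (auto simp: list_all2_conv_all_nth intro: R_arity)
  define A where "A k = take k ss @ replicate (n - k) Bot" for k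
  define A' where "A' k = take k ss' @ replicate (n - k) Bot" for k
  have "k \<le> n \<Longrightarrow> (tcomp t (A k), tcomp t' (A' k)) \<in> R" for k
  proof (induction k)
    case 0
    then show ?case using tt n' tcomp_unit'[of t'] by (simp add: A_def A'_def n_def)
  next
    case (Suc k)
    then have k: "k < n" by simp
    have lA: "length (A k) = tarity t" "length (A' k) = tarity t'"
      using k l lss' n' by (auto simp: A_def A'_def n_def)
    have Ak: "A k ! k = Bot" "A' k ! k = Bot"
      using k l lss' by (auto simp: A_def A'_def n_def nth_append)
    have AS: "A (Suc k) = (A k)[k := ss ! k]" "A' (Suc k) = (A' k)[k := ss' ! k]"
    proof -
      have nk: "n - k = Suc (n - Suc k)" using k by simp
      show "A (Suc k) = (A k)[k := ss ! k]" "A' (Suc k) = (A' k)[k := ss' ! k]"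
        using k l lss' n_def unfolding A_def A'_def nk
        by (auto simp: list_update_append take_Suc_conv_app_nth)
    qed
    have tk: "take k (A k) = take k ss" "take k (A' k) = take k ss'"
      using k l lss' n_def by (auto simp: A_def A'_def)
    define pos where "pos = sum_list (map tarity (take k ss)) + 1"
    have pos': "sum_list (map tarity (take k ss')) + 1 = pos"
    proof -
      have "map tarity (take k ss') = map tarity (take k ss)"
        using ar k l lss' n_def by (intro nth_equalityI) auto
      then show ?thesis by (simp add: pos_def)
    qed
    have e1: "tcomp t (A (Suc k)) = pcomp (tcomp t (A k)) pos (ss ! k)"
      using tcomp_replace[OF lA(1), of k "ss ! k"] lA Ak k AS tk by (simp add: pos_def n_def)
    have e2: "tcomp t' (A' (Suc k)) = pcomp (tcomp t' (A' k)) pos (ss' ! k)"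
      using tcomp_replace[OF lA(2), of k "ss' ! k"] lA Ak k AS tk pos' n' by simp
    have sumA: "sum_list (map tarity (A k)) = sum_list (map tarity (take k ss)) + 1 + sum_list (map tarity (drop (Suc k) (A k)))"
    proof -
      have "A k = take k (A k) @ A k ! k # drop (Suc k) (A k)" using k lA(1) n_def
        by (metis id_take_nth_drop)
      then have "sum_list (map tarity (A k)) = sum_list (map tarity (take k (A k))) + tarity (A k ! k) + sum_list (map tarity (drop (Suc k) (A k)))"
        by (metis add.assoc list.simps(9) map_append sum_list.Cons sum_list_append)
      then show ?thesis using tk Ak by simp
    qed
    have ATk: "set (A k) \<subseteq> TT" "set (A' k) \<subseteq> TT"
      using sT by (auto simp: A_def A'_def dest: in_set_takeD)
    have pos_le: "1 \<le> pos" "pos \<le> tarity (tcomp t (A k))"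
      using sumA lA by (auto simp: pos_def)
    have pos_le': "pos \<le> tarity (tcomp t' (A' k))"
      using pos_le(2) R_arity[OF Suc.IH] k by simp
    have skT: "ss ! k \<in> TT" using sT k l n_def by auto
    have r1: "(pcomp (tcomp t (A k)) pos (ss ! k), pcomp (tcomp t' (A' k)) pos (ss ! k)) \<in> R"
      using R_left[OF _ skT pos_le] Suc.IH k by simp
    have r2: "(pcomp (tcomp t' (A' k)) pos (ss ! k), pcomp (tcomp t' (A' k)) pos (ss' ! k)) \<in> R"
    proof (rule R_right[OF _ _ pos_le(1) pos_le'])
      show "(ss ! k, ss' ! k) \<in> R" using ss k l n_def by (auto simp: list_all2_conv_all_nth)
      show "tcomp t' (A' k) \<in> TT" using tT ATk by blast
    qed
    show ?case using R_trans[OF r1 r2] e1 e2 by simp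
  qed
  from this[of n] show ?thesis using l lss' n_def by (simp add: A_def A'_def)
qed

lemma qcomp_eq:
  assumes Y: "Y \<in> C1" and Ys: "set Ys \<subseteq> C1" and l: "length Ys = qarity Y"
    and s: "s \<in> Y" and ss: "list_all2 (\<in>) ss Ys"
  shows "qcomp R Y Ys = pi (tcomp s ss)"
proof -
  have "(tcomp (qrep Y) (map qrep Ys), tcomp s ss) \<in> R"
  proof (rule tcomp_cong)
    show "(qrep Y, s) \<in> R" using class_R[OF Y qrep_in[OF Y] s] .
    show "length (map qrep Ys) = tarity (qrep Y)" using l by (simp add: qarity_def)
    show "list_all2 (\<lambda>a b. (a, b) \<in> R) (map qrep Ys) ss"
      using ss Ys by (auto simp: list_all2_conv_all_nth intro!: class_R[of "Ys ! i" for i] qrep_in)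
  qed
  then show ?thesis unfolding qcomp_def
    using R_sub pi_eq_iff by blast
qed

end

lemma supp_basis[simp]: "supp (basis w :: _ \<Rightarrow> 'k::zero_neq_one) = {w}"
  by (auto simp: supp_def basis_def)

lemma lin_ext_super:
  assumes "finite U" "supp a \<subseteq> U"
  shows "lin_ext g a v = (\<Sum>u\<in>U. a u * g u v)"
  unfolding lin_ext_def by (rule sum.mono_neutral_left) (use assms in \<open>auto simp: supp_def\<close>)

lemma Tmult_super:
  fixes a b :: "'o list \<times> 'o list \<Rightarrow> 'k::comm_ring_1"
  assumes U: "finite U" "supp a \<subseteq> U" and V: "finite V" "supp b \<subseteq> V"
  shows "Tmult a b p = (\<Sum>u\<in>U. \<Sum>v\<in>V. if (fst u @ fst v, snd u @ snd v) = p then a u * b v else 0)"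
proof -
  have i: "(\<Sum>v\<in>supp b. if (fst u @ fst v, snd u @ snd v) = p then a u * b v else 0)
      = (\<Sum>v\<in>V. if (fst u @ fst v, snd u @ snd v) = p then a u * b v else 0)" for u
    by (rule sum.mono_neutral_left) (use V in \<open>auto simp: supp_def\<close>)
  have "Tmult a b p = (\<Sum>u\<in>supp a. \<Sum>v\<in>V. if (fst u @ fst v, snd u @ snd v) = p then a u * b v else 0)"
    unfolding Tmult_def using i by simp
  also have "\<dots> = (\<Sum>u\<in>U. \<Sum>v\<in>V. if (fst u @ fst v, snd u @ snd v) = p then a u * b v else 0)"
  proof (rule sum.mono_neutral_left[OF U])
    show "\<forall>u\<in>U - supp a. (\<Sum>v\<in>V. if (fst u @ fst v, snd u @ snd v) = p then a u * b v else 0) = 0"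
    proof
      fix u assume "u \<in> U - supp a"
      then have "a u = 0" by (simp add: supp_def)
      then show "(\<Sum>v\<in>V. if (fst u @ fst v, snd u @ snd v) = p then a u * b v else 0) = 0" by (intro sum.neutral) simp
    qed
  qed
  finally show ?thesis .
qed

lemma Nmult_super:
  fixes a b :: "'o list \<Rightarrow> 'k::comm_ring_1"
  assumes U: "finite U" "supp a \<subseteq> U" and V: "finite V" "supp b \<subseteq> V"
  shows "Nmult a b w = (\<Sum>u\<in>U. \<Sum>v\<in>V. if u @ v = w then a u * b v else 0)"
proof -
  have i: "(\<Sum>v\<in>supp b. if u @ v = w then a u * b v else 0)
      = (\<Sum>v\<in>V. if u @ v = w then a u * b v else 0)" for u
    by (rule sum.mono_neutral_left) (use V in \<open>auto simp: supp_def\<close>)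
  have "Nmult a b w = (\<Sum>u\<in>supp a. \<Sum>v\<in>V. if u @ v = w then a u * b v else 0)"
    unfolding Nmult_def using i by simp
  also have "\<dots> = (\<Sum>u\<in>U. \<Sum>v\<in>V. if u @ v = w then a u * b v else 0)"
  proof (rule sum.mono_neutral_left[OF U])
    show "\<forall>u\<in>U - supp a. (\<Sum>v\<in>V. if u @ v = w then a u * b v else 0) = 0"
    proof
      fix u assume "u \<in> U - supp a"
      then have "a u = 0" by (simp add: supp_def)
      then show "(\<Sum>v\<in>V. if u @ v = w then a u * b v else 0) = 0" by (intro sum.neutral) simp
    qed
  qed
  finally show ?thesis .
qed

lemma supp_Tmult:
  fixes a b :: "'o list \<times> 'o list \<Rightarrow> 'k::comm_ring_1"
  shows "supp (Tmult a b) \<subseteq> (\<lambda>(u, v). (fst u @ fst v, snd u @ snd v)) ` (supp a \<times> supp b)"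
proof
  fix p assume "p \<in> supp (Tmult a b)"
  then have "Tmult a b p \<noteq> 0" by (simp add: supp_def)
  show "p \<in> (\<lambda>(u, v). (fst u @ fst v, snd u @ snd v)) ` (supp a \<times> supp b)"
  proof (rule ccontr)
    assume n: "p \<notin> (\<lambda>(u, v). (fst u @ fst v, snd u @ snd v)) ` (supp a \<times> supp b)"
    have "\<forall>u\<in>supp a. \<forall>v\<in>supp b. (fst u @ fst v, snd u @ snd v) \<noteq> p"
    proof (intro ballI)
      fix u v assume "u \<in> supp a" "v \<in> supp b"
      then have "(u, v) \<in> supp a \<times> supp b" by simp
      then show "(fst u @ fst v, snd u @ snd v) \<noteq> p" using n by (metis (no_types, lifting) case_prod_conv image_eqI)
    qed
    then have "Tmult a b p = 0" unfolding Tmult_def by simp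
    then show False using \<open>Tmult a b p \<noteq> 0\<close> by simp
  qed
qed

lemma finite_supp_Tmult:
  fixes a b :: "'o list \<times> 'o list \<Rightarrow> 'k::comm_ring_1"
  shows "finite (supp a) \<Longrightarrow> finite (supp b) \<Longrightarrow> finite (supp (Tmult a b))"
  by (rule finite_subset[OF supp_Tmult]) auto

lemma supp_Nmult:
  fixes a b :: "'o list \<Rightarrow> 'k::comm_ring_1"
  shows "supp (Nmult a b) \<subseteq> (\<lambda>(u, v). u @ v) ` (supp a \<times> supp b)"
proof
  fix p assume "p \<in> supp (Nmult a b)"
  then have "Nmult a b p \<noteq> 0" by (simp add: supp_def)
  show "p \<in> (\<lambda>(u, v). u @ v) ` (supp a \<times> supp b)"
  proof (rule ccontr)
    assume n: "p \<notin> (\<lambda>(u, v). u @ v) ` (supp a \<times> supp b)"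
    have "\<forall>u\<in>supp a. \<forall>v\<in>supp b. u @ v \<noteq> p"
    proof (intro ballI)
      fix u v assume "u \<in> supp a" "v \<in> supp b"
      then have "(u, v) \<in> supp a \<times> supp b" by simp
      then show "u @ v \<noteq> p" using n by (metis (no_types, lifting) case_prod_conv image_eqI)
    qed
    then have "Nmult a b p = 0" unfolding Nmult_def by simp
    then show False using \<open>Nmult a b p \<noteq> 0\<close> by simp
  qed
qed

lemma finite_supp_Nmult:
  fixes a b :: "'o list \<Rightarrow> 'k::comm_ring_1"
  shows "finite (supp a) \<Longrightarrow> finite (supp b) \<Longrightarrow> finite (supp (Nmult a b))"
  by (rule finite_subset[OF supp_Nmult]) auto

lemma supp_sum: "supp (\<lambda>p. \<Sum>i\<in>I. A i p) \<subseteq> (\<Union>i\<in>I. supp (A i))"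
proof
  fix p assume "p \<in> supp (\<lambda>p. \<Sum>i\<in>I. A i p)"
  then have "(\<Sum>i\<in>I. A i p) \<noteq> 0" by (simp add: supp_def)
  then obtain i where "i \<in> I" "A i p \<noteq> 0" by (meson sum.neutral)
  then show "p \<in> (\<Union>i\<in>I. supp (A i))" by (auto simp: supp_def)
qed

lemma finite_supp_sum:
  "finite I \<Longrightarrow> (\<And>i. i \<in> I \<Longrightarrow> finite (supp (A i))) \<Longrightarrow> finite (supp (\<lambda>p. \<Sum>i\<in>I. A i p))"
  by (rule finite_subset[OF supp_sum]) auto

lemma finite_supp_ind:
  "finite (supp (\<lambda>p. \<Sum>q\<in>F. if pr q = p then (1::'k::comm_ring_1) else 0))"
proof (cases "finite F")
  case True
  have "supp (\<lambda>p. \<Sum>q\<in>F. if pr q = p then (1::'k) else 0) \<subseteq> pr ` F"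
  proof
    fix p assume "p \<in> supp (\<lambda>p. \<Sum>q\<in>F. if pr q = p then (1::'k) else 0)"
    then have "(\<Sum>q\<in>F. if pr q = p then (1::'k) else 0) \<noteq> 0" by (simp add: supp_def)
    show "p \<in> pr ` F"
    proof (rule ccontr)
      assume "p \<notin> pr ` F"
      then have "\<forall>q\<in>F. pr q \<noteq> p" by blast
      then have "(\<Sum>q\<in>F. if pr q = p then (1::'k) else 0) = 0" by simp
      then show False using \<open>(\<Sum>q\<in>F. if pr q = p then (1::'k) else 0) \<noteq> 0\<close> by simp
    qed
  qed
  then show ?thesis using True finite_subset by blast
next
  case False
  then show ?thesis by (simp add: supp_def)
qed

lemma sum_swap4:
  "(\<Sum>u\<in>U. \<Sum>v\<in>V. \<Sum>i\<in>I. \<Sum>j\<in>J. f u v i j) = (\<Sum>i\<in>I. \<Sum>j\<in>J. \<Sum>u\<in>U. \<Sum>v\<in>V. f u v i j)"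
proof -
  have "(\<Sum>u\<in>U. \<Sum>v\<in>V. \<Sum>i\<in>I. \<Sum>j\<in>J. f u v i j) = (\<Sum>u\<in>U. \<Sum>i\<in>I. \<Sum>v\<in>V. \<Sum>j\<in>J. f u v i j)"
    by (rule sum.cong[OF refl], rule sum.swap)
  also have "\<dots> = (\<Sum>i\<in>I. \<Sum>u\<in>U. \<Sum>v\<in>V. \<Sum>j\<in>J. f u v i j)"
    by (rule sum.swap)
  also have "\<dots> = (\<Sum>i\<in>I. \<Sum>u\<in>U. \<Sum>j\<in>J. \<Sum>v\<in>V. f u v i j)"
    by (rule sum.cong[OF refl], rule sum.cong[OF refl], rule sum.swap)
  also have "\<dots> = (\<Sum>i\<in>I. \<Sum>j\<in>J. \<Sum>u\<in>U. \<Sum>v\<in>V. f u v i j)"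
    by (rule sum.cong[OF refl], rule sum.swap)
  finally show ?thesis .
qed

lemma Tmult_sum:
  fixes A :: "'i \<Rightarrow> 'o list \<times> 'o list \<Rightarrow> 'k::comm_ring_1" and B :: "'j \<Rightarrow> 'o list \<times> 'o list \<Rightarrow> 'k"
  assumes I: "finite I" and J: "finite J"
    and fA: "\<And>i. i \<in> I \<Longrightarrow> finite (supp (A i))" and fB: "\<And>j. j \<in> J \<Longrightarrow> finite (supp (B j))"
  shows "Tmult (\<lambda>p. \<Sum>i\<in>I. A i p) (\<lambda>p. \<Sum>j\<in>J. B j p) p = (\<Sum>i\<in>I. \<Sum>j\<in>J. Tmult (A i) (B j) p)"
proof -
  define U where "U = (\<Union>i\<in>I. supp (A i))"
  define V where "V = (\<Union>j\<in>J. supp (B j))"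
  have U: "finite U" using I fA by (simp add: U_def)
  have V: "finite V" using J fB by (simp add: V_def)
  let ?c = "\<lambda>u v. (fst u @ fst v, snd u @ snd v) = p"
  have "Tmult (\<lambda>p. \<Sum>i\<in>I. A i p) (\<lambda>p. \<Sum>j\<in>J. B j p) p
      = (\<Sum>u\<in>U. \<Sum>v\<in>V. if ?c u v then (\<Sum>i\<in>I. A i u) * (\<Sum>j\<in>J. B j v) else 0)"
    by (rule Tmult_super[OF U _ V]) (simp_all only: U_def V_def supp_sum)
  also have "\<dots> = (\<Sum>u\<in>U. \<Sum>v\<in>V. \<Sum>i\<in>I. \<Sum>j\<in>J. if ?c u v then A i u * B j v else 0)"
    by (intro sum.cong refl) (simp add: sum_product)
  also have "\<dots> = (\<Sum>i\<in>I. \<Sum>j\<in>J. \<Sum>u\<in>U. \<Sum>v\<in>V. if ?c u v then A i u * B j v else 0)"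
    by (rule sum_swap4)
  also have "\<dots> = (\<Sum>i\<in>I. \<Sum>j\<in>J. Tmult (A i) (B j) p)"
  proof (intro sum.cong refl)
    fix i j assume "i \<in> I" "j \<in> J"
    then show "(\<Sum>u\<in>U. \<Sum>v\<in>V. if ?c u v then A i u * B j v else 0) = Tmult (A i) (B j) p"
      by (intro Tmult_super[symmetric]) (use U V in \<open>auto simp: U_def V_def\<close>)
  qed
  finally show ?thesis .
qed


lemma dsum_filter:
  assumes "finite U" "finite V"
  shows "(\<Sum>u\<in>U. \<Sum>v\<in>V. if c u v then f u v else 0) = (\<Sum>x\<in>{x \<in> U \<times> V. c (fst x) (snd x)}. f (fst x) (snd x))"
proof -
  have "(\<Sum>u\<in>U. \<Sum>v\<in>V. if c u v then f u v else 0) = (\<Sum>x\<in>U \<times> V. if c (fst x) (snd x) then f (fst x) (snd x) else 0)"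
    by (simp add: sum.cartesian_product case_prod_beta)
  also have "\<dots> = (\<Sum>x\<in>{x \<in> U \<times> V. c (fst x) (snd x)}. f (fst x) (snd x))"
    using assms by (simp add: sum.inter_filter)
  finally show ?thesis .
qed

context qset begin

abbreviation "FF \<equiv> fiber_forests S ar R"

lemma RF_iff: "f \<in> RF \<longleftrightarrow> set f \<subseteq> TT \<and> Bot \<notin> set f"
  by (simp add: red_words_def)

lemma RF_append[simp]: "f @ g \<in> RF \<longleftrightarrow> f \<in> RF \<and> g \<in> RF"
  by (auto simp: RF_iff)

lemma RF_take[intro]: "f \<in> RF \<Longrightarrow> take k f \<in> RF"
  by (auto simp: RF_iff dest: in_set_takeD)

lemma RF_drop[intro]: "f \<in> RF \<Longrightarrow> drop k f \<in> RF"
  by (auto simp: RF_iff dest: in_set_dropD)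

lemma fib_iff: "f \<in> FF u \<longleftrightarrow> f \<in> RF \<and> map pi f = u"
  by (simp add: fiber_forests_def)

lemma finite_fib: "finite (FF u)"
proof -
  have "FF u \<subseteq> {f. list_all2 (\<lambda>t X. t \<in> X \<and> X \<in> C1) f u}"
  proof
    fix f assume "f \<in> FF u"
    then have f: "f \<in> RF" "map pi f = u" by (auto simp: fib_iff)
    have "list_all2 (\<lambda>t X. t \<in> X \<and> X \<in> C1) f (map pi f)"
      using f(1) by (auto simp: list_all2_map2 list_all2_refl RF_iff intro!: list.rel_refl_strong in_pi pi_C1)
    then show "f \<in> {f. list_all2 (\<lambda>t X. t \<in> X \<and> X \<in> C1) f u}" using f by simp
  qed
  moreover have "finite {f. list_all2 (\<lambda>t X. t \<in> X \<and> X \<in> C1) f u}"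
  proof (rule finite_list_all2, rule ballI)
    fix X assume "X \<in> set u"
    show "finite {t. t \<in> X \<and> X \<in> C1}"
      by (cases "X \<in> C1") (auto simp: class_finite)
  qed
  ultimately show ?thesis using finite_subset by blast
qed

definition Phi :: "('f sterm set list \<Rightarrow> 'k::comm_ring_1) \<Rightarrow> 'f sterm list \<Rightarrow> 'k" where
  "Phi a = (\<lambda>f. if f \<in> RF then a (map pi f) else 0)"

lemma phi_eq:
  fixes a :: "'f sterm set list \<Rightarrow> 'k::field"
  assumes fa: "finite (supp a)"
  shows "phi S ar R a = Phi a"
proof
  fix f
  have inner: "(\<Sum>g\<in>FF u. basis g f) = (if f \<in> FF u then (1::'k) else 0)" for u
  proof -
    have "(\<Sum>g\<in>FF u. basis g f) = (\<Sum>g\<in>FF u. if f = g then (1::'k) else 0)"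
      by (simp add: basis_def)
    also have "\<dots> = (if f \<in> FF u then 1 else 0)"
      using finite_fib[of u] by (rule sum.delta')
    finally show ?thesis .
  qed
  have "phi S ar R a f = (\<Sum>u\<in>supp a. a u * (if f \<in> FF u then 1 else 0))"
    unfolding phi_def lin_ext_def using inner by simp
  also have "\<dots> = (\<Sum>u\<in>supp a. if map pi f = u then (if f \<in> RF then a u else 0) else 0)"
    by (intro sum.cong refl) (auto simp: fib_iff)
  also have "\<dots> = (if map pi f \<in> supp a then (if f \<in> RF then a (map pi f) else 0) else 0)"
    using fa by (rule sum.delta')
  also have "\<dots> = Phi a f"
    by (auto simp: Phi_def supp_def)
  finally show "phi S ar R a f = Phi a f" .
qed

lemma supp_Phi: "supp (Phi a) \<subseteq> (\<Union>u\<in>supp a. FF u)"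
  by (auto simp: supp_def Phi_def fib_iff)

lemma finite_supp_Phi: "finite (supp a) \<Longrightarrow> finite (supp (Phi a))"
  using supp_Phi finite_fib by (meson finite_UN_I finite_subset)

definition Psi :: "('f sterm set list \<times> 'f sterm set list \<Rightarrow> 'k::comm_ring_1) \<Rightarrow> 'f sterm list \<times> 'f sterm list \<Rightarrow> 'k" where
  "Psi T = (\<lambda>p. if fst p \<in> RF \<and> snd p \<in> RF then T (map pi (fst p), map pi (snd p)) else 0)"

lemma supp_Psi: "supp (Psi T) \<subseteq> (\<Union>x\<in>supp T. FF (fst x) \<times> FF (snd x))"
  by (auto simp: supp_def Psi_def fib_iff)

lemma finite_supp_Psi: "finite (supp T) \<Longrightarrow> finite (supp (Psi T))"
  by (intro finite_subset[OF supp_Psi] finite_UN_I finite_cartesian_product finite_fib)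

end

context qset begin

lemma Psi_nz: "Psi T p \<noteq> 0 \<Longrightarrow> fst p \<in> RF \<and> snd p \<in> RF \<and> Psi T p = T (map pi (fst p), map pi (snd p))"
  by (auto simp: Psi_def split: if_splits)

lemma Tmult_Psi:
  fixes A B :: "'f sterm set list \<times> 'f sterm set list \<Rightarrow> 'k::comm_ring_1"
  assumes fA: "finite (supp A)" and fB: "finite (supp B)"
  shows "Tmult (Psi A) (Psi B) = Psi (Tmult A B)"
proof
  fix p :: "'f sterm list \<times> 'f sterm list"
  obtain g h where p: "p = (g, h)" by (cases p)
  let ?cat = "\<lambda>u v. (fst u @ fst v, snd u @ snd v)"
  let ?PI = "\<lambda>u. (map pi (fst u), map pi (snd u))"
  have fA': "finite (supp (Psi A))" and fB': "finite (supp (Psi B))"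
    using fA fB finite_supp_Psi by blast+
  define SL where "SL = {x \<in> supp (Psi A) \<times> supp (Psi B). ?cat (fst x) (snd x) = p}"
  define SR where "SR = {x \<in> supp A \<times> supp B. ?cat (fst x) (snd x) = ?PI p}"
  have L: "Tmult (Psi A) (Psi B) p = (\<Sum>x\<in>SL. Psi A (fst x) * Psi B (snd x))"
    unfolding Tmult_def SL_def by (rule dsum_filter[OF fA' fB'])
  have Rt: "Tmult A B (?PI p) = (\<Sum>x\<in>SR. A (fst x) * B (snd x))"
    unfolding Tmult_def SR_def by (rule dsum_filter[OF fA fB])
  have SLRF: "x \<in> SL \<Longrightarrow> fst (fst x) \<in> RF \<and> snd (fst x) \<in> RF \<and> fst (snd x) \<in> RF \<and> snd (snd x) \<in> RF
       \<and> Psi A (fst x) = A (?PI (fst x)) \<and> Psi B (snd x) = B (?PI (snd x))" for x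
    using Psi_nz[of A "fst x"] Psi_nz[of B "snd x"] by (auto simp: SL_def supp_def)
  show "Tmult (Psi A) (Psi B) p = Psi (Tmult A B) p"
  proof (cases "g \<in> RF \<and> h \<in> RF")
    case False
    have "SL = {}"
    proof (rule ccontr)
      assume "SL \<noteq> {}"
      then obtain x where x: "x \<in> SL" by blast
      then have "?cat (fst x) (snd x) = p" by (simp add: SL_def)
      then show False using SLRF[OF x] False p by auto
    qed
    then have "Tmult (Psi A) (Psi B) p = 0" using L by simp
    moreover have "Psi (Tmult A B) p = 0" using False p unfolding Psi_def by auto
    ultimately show ?thesis by simp
  next
    case True
    have "(\<Sum>x\<in>SL. Psi A (fst x) * Psi B (snd x)) = (\<Sum>x\<in>SR. A (fst x) * B (snd x))"
    proof (rule sum.reindex_bij_witness[of _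
          "\<lambda>y. ((take (length (fst (fst y))) g, take (length (snd (fst y))) h),
                 (drop (length (fst (fst y))) g, drop (length (snd (fst y))) h))"
          "\<lambda>x. (?PI (fst x), ?PI (snd x))"])
      fix x assume x: "x \<in> SL"
      then have c: "fst (fst x) @ fst (snd x) = g" "snd (fst x) @ snd (snd x) = h"
        using p by (auto simp: SL_def)
      show "((take (length (fst (fst (?PI (fst x), ?PI (snd x))))) g, take (length (snd (fst (?PI (fst x), ?PI (snd x))))) h),
             (drop (length (fst (fst (?PI (fst x), ?PI (snd x))))) g, drop (length (snd (fst (?PI (fst x), ?PI (snd x))))) h)) = x"
        using c by (auto simp: prod_eq_iff)
      have "A (?PI (fst x)) \<noteq> 0" "B (?PI (snd x)) \<noteq> 0"
        using SLRF[OF x] x by (auto simp: SL_def supp_def)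
      then show "(?PI (fst x), ?PI (snd x)) \<in> SR"
        using c p by (auto simp: SR_def supp_def)
      show "A (fst (?PI (fst x), ?PI (snd x))) * B (snd (?PI (fst x), ?PI (snd x))) = Psi A (fst x) * Psi B (snd x)"
        using SLRF[OF x] by simp
    next
      fix y assume y: "y \<in> SR"
      then have c: "fst (fst y) @ fst (snd y) = map pi g" "snd (fst y) @ snd (snd y) = map pi h"
        using p by (auto simp: SR_def)
      have lg: "length (fst (fst y)) \<le> length g" "length (snd (fst y)) \<le> length h"
        using arg_cong[OF c(1), of length] arg_cong[OF c(2), of length] by auto
      have t1: "map pi (take (length (fst (fst y))) g) = fst (fst y)"
        by (metis c(1) append_eq_conv_conj length_map take_map)
      have t2: "map pi (take (length (snd (fst y))) h) = snd (fst y)"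
        by (metis c(2) append_eq_conv_conj length_map take_map)
      have t3: "map pi (drop (length (fst (fst y))) g) = fst (snd y)"
        by (metis c(1) append_eq_conv_conj length_map drop_map)
      have t4: "map pi (drop (length (snd (fst y))) h) = snd (snd y)"
        by (metis c(2) append_eq_conv_conj length_map drop_map)
      show "(?PI (fst ((take (length (fst (fst y))) g, take (length (snd (fst y))) h),
                 (drop (length (fst (fst y))) g, drop (length (snd (fst y))) h))),
             ?PI (snd ((take (length (fst (fst y))) g, take (length (snd (fst y))) h),
                 (drop (length (fst (fst y))) g, drop (length (snd (fst y))) h)))) = y"
        using t1 t2 t3 t4 by (auto simp: prod_eq_iff)
      have nz: "A (fst y) \<noteq> 0" "B (snd y) \<noteq> 0" using y by (auto simp: SR_def supp_def)
      have RFs: "take (length (fst (fst y))) g \<in> RF" "take (length (snd (fst y))) h \<in> RF"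
          "drop (length (fst (fst y))) g \<in> RF" "drop (length (snd (fst y))) h \<in> RF"
        using True by auto
      show "((take (length (fst (fst y))) g, take (length (snd (fst y))) h),
                 (drop (length (fst (fst y))) g, drop (length (snd (fst y))) h)) \<in> SL"
        unfolding SL_def using nz RFs t1 t2 t3 t4 p by (auto simp: supp_def Psi_def)
    qed
    moreover have "Psi (Tmult A B) p = Tmult A B (?PI p)" using True p by (simp add: Psi_def)
    ultimately show ?thesis using L Rt by simp
  qed
qed

lemma Nmult_Phi:
  fixes a b :: "'f sterm set list \<Rightarrow> 'k::comm_ring_1"
  assumes fa: "finite (supp a)" and fb: "finite (supp b)"
  shows "Nmult (Phi a) (Phi b) = Phi (Nmult a b)"
proof
  fix g :: "'f sterm list"
  have fa': "finite (supp (Phi a))" and fb': "finite (supp (Phi b))"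
    using fa fb finite_supp_Phi by blast+
  define SL where "SL = {x \<in> supp (Phi a) \<times> supp (Phi b). fst x @ snd x = g}"
  define SR where "SR = {x \<in> supp a \<times> supp b. fst x @ snd x = map pi g}"
  have L: "Nmult (Phi a) (Phi b) g = (\<Sum>x\<in>SL. Phi a (fst x) * Phi b (snd x))"
    unfolding Nmult_def SL_def by (rule dsum_filter[OF fa' fb'])
  have Rt: "Nmult a b (map pi g) = (\<Sum>x\<in>SR. a (fst x) * b (snd x))"
    unfolding Nmult_def SR_def by (rule dsum_filter[OF fa fb])
  have SLRF: "x \<in> SL \<Longrightarrow> fst x \<in> RF \<and> snd x \<in> RF
       \<and> Phi a (fst x) = a (map pi (fst x)) \<and> Phi b (snd x) = b (map pi (snd x))" for x
    by (auto simp: SL_def supp_def Phi_def split: if_splits)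
  show "Nmult (Phi a) (Phi b) g = Phi (Nmult a b) g"
  proof (cases "g \<in> RF")
    case False
    have "SL = {}"
    proof (rule ccontr)
      assume "SL \<noteq> {}"
      then obtain x where x: "x \<in> SL" by blast
      then have "fst x @ snd x = g" by (simp add: SL_def)
      then show False using SLRF[OF x] False by auto
    qed
    then have "Nmult (Phi a) (Phi b) g = 0" using L by simp
    moreover have "Phi (Nmult a b) g = 0" using False by (simp add: Phi_def)
    ultimately show ?thesis by simp
  next
    case True
    have "(\<Sum>x\<in>SL. Phi a (fst x) * Phi b (snd x)) = (\<Sum>x\<in>SR. a (fst x) * b (snd x))"
    proof (rule sum.reindex_bij_witness[of _
          "\<lambda>y. (take (length (fst y)) g, drop (length (fst y)) g)"
          "\<lambda>x. (map pi (fst x), map pi (snd x))"])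
      fix x assume x: "x \<in> SL"
      then have c: "fst x @ snd x = g" by (auto simp: SL_def)
      show "(take (length (fst (map pi (fst x), map pi (snd x)))) g, drop (length (fst (map pi (fst x), map pi (snd x)))) g) = x"
        using c by (auto simp: prod_eq_iff)
      have "a (map pi (fst x)) \<noteq> 0" "b (map pi (snd x)) \<noteq> 0"
        using SLRF[OF x] x by (auto simp: SL_def supp_def)
      then show "(map pi (fst x), map pi (snd x)) \<in> SR"
        using c by (auto simp: SR_def supp_def)
      show "a (fst (map pi (fst x), map pi (snd x))) * b (snd (map pi (fst x), map pi (snd x))) = Phi a (fst x) * Phi b (snd x)"
        using SLRF[OF x] by simp
    next
      fix y assume y: "y \<in> SR"
      then have c: "fst y @ snd y = map pi g" by (auto simp: SR_def)
      have t1: "map pi (take (length (fst y)) g) = fst y"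
        by (metis c append_eq_conv_conj length_map take_map)
      have t3: "map pi (drop (length (fst y)) g) = snd y"
        by (metis c append_eq_conv_conj length_map drop_map)
      show "(map pi (fst (take (length (fst y)) g, drop (length (fst y)) g)),
             map pi (snd (take (length (fst y)) g, drop (length (fst y)) g))) = y"
        using t1 t3 by (auto simp: prod_eq_iff)
      have nz: "a (fst y) \<noteq> 0" "b (snd y) \<noteq> 0" using y by (auto simp: SR_def supp_def)
      have RFs: "take (length (fst y)) g \<in> RF" "drop (length (fst y)) g \<in> RF"
        using True by auto
      show "(take (length (fst y)) g, drop (length (fst y)) g) \<in> SL"
        unfolding SL_def using nz RFs t1 t3 by (auto simp: supp_def Phi_def)
    qed
    moreover have "Phi (Nmult a b) g = Nmult a b (map pi g)" using True by (simp add: Phi_def)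
    ultimately show ?thesis using L Rt by simp
  qed
qed

lemma tensor_map_phi:
  fixes T :: "'f sterm set list \<times> 'f sterm set list \<Rightarrow> 'k::field"
  assumes fT: "finite (supp T)"
  shows "tensor_map (phi S ar R) (phi S ar R) T = Psi T"
proof
  fix p :: "'f sterm list \<times> 'f sterm list"
  have pb: "phi S ar R (basis u :: _ \<Rightarrow> 'k) = Phi (basis u)" for u
    by (rule phi_eq) simp
  have "tensor_map (phi S ar R) (phi S ar R) T p
      = (\<Sum>x\<in>supp T. T x * (tensor (Phi (basis (fst x))) (Phi (basis (snd x)))) p)"
    unfolding tensor_map_def lin_ext_def pb by (simp add: case_prod_beta)
  also have "\<dots> = (\<Sum>x\<in>supp T. if (map pi (fst p), map pi (snd p)) = x then
                     (if fst p \<in> RF \<and> snd p \<in> RF then T x else 0) else 0)"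
    by (intro sum.cong refl) (auto simp: tensor_def Phi_def basis_def case_prod_beta)
  also have "\<dots> = (if (map pi (fst p), map pi (snd p)) \<in> supp T then
                     (if fst p \<in> RF \<and> snd p \<in> RF then T (map pi (fst p), map pi (snd p)) else 0) else 0)"
    using fT by (rule sum.delta')
  also have "\<dots> = Psi T p"
    by (auto simp: Psi_def supp_def)
  finally show "tensor_map (phi S ar R) (phi S ar R) T p = Psi T p" .
qed

end

fun fill :: "'a \<Rightarrow> 'a list \<Rightarrow> 'f sterm list \<Rightarrow> 'f sterm list" where
  "fill e [] h = []"
| "fill e (Y # Ys) h = (if Y = e then Bot # fill e Ys h else hd h # fill e Ys (tl h))"

lemma length_fill[simp]: "length (fill e Ys h) = length Ys"
  by (induction Ys arbitrary: h) auto

lemma set_fill: "length (filter (\<lambda>Y. Y \<noteq> e) Ys) = length h \<Longrightarrow> set (fill e Ys h) \<subseteq> insert Bot (set h)"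
proof (induction Ys arbitrary: h)
  case Nil
  then show ?case by simp
next
  case (Cons Y Ys)
  show ?case
  proof (cases "Y = e")
    case True
    then show ?thesis using Cons by auto
  next
    case False
    with Cons.prems obtain h1 h' where h: "h = h1 # h'" by (cases h) auto
    then show ?thesis using Cons.IH[of h'] Cons.prems False by auto
  qed
qed

context qset begin

abbreviation "F2 \<equiv> factorizations TT tarity tcomp"
abbreviation "F1 \<equiv> factorizations C1 qarity (qcomp R)"

lemma F2_iff: "q \<in> F2 t \<longleftrightarrow> fst q \<in> TT \<and> set (snd q) \<subseteq> TT \<and> length (snd q) = tarity (fst q) \<and> tcomp (fst q) (snd q) = t"
  by (cases q) (simp add: factorizations_def)

lemma F1_iff: "Q \<in> F1 x \<longleftrightarrow> fst Q \<in> C1 \<and> set (snd Q) \<subseteq> C1 \<and> length (snd Q) = qarity (fst Q) \<and> qcomp R (fst Q) (snd Q) = x"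
  by (cases Q) (simp add: factorizations_def)

lemma finite_F2: "finite (F2 t)"
proof -
  have "F2 t \<subseteq> {(y, ys). length ys = tarity y \<and> tcomp y ys = t}"
    by (auto simp: factorizations_def)
  then show ?thesis using finite_facts finite_subset by blast
qed

lemma finite_F1:
  assumes x: "x \<in> C1" shows "finite (F1 x)"
proof -
  have "F1 x \<subseteq> (\<lambda>q. (pi (fst q), map pi (snd q))) ` (\<Union>t\<in>x. F2 t)"
  proof
    fix Q assume Q: "Q \<in> F1 x"
    then have Q': "fst Q \<in> C1" "set (snd Q) \<subseteq> C1" "length (snd Q) = qarity (fst Q)" "qcomp R (fst Q) (snd Q) = x"
      by (auto simp: F1_iff)
    define q where "q = (qrep (fst Q), map qrep (snd Q))"
    have qT: "fst q \<in> TT" "set (snd q) \<subseteq> TT"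
      using Q' qrep_in class_sub by (auto simp: q_def)
    have tx: "tcomp (fst q) (snd q) \<in> x"
    proof -
      have "pi (tcomp (fst q) (snd q)) = x" using Q'(4) by (simp add: qcomp_def q_def)
      moreover have "tcomp (fst q) (snd q) \<in> TT" using qT by blast
      ultimately show ?thesis using in_pi by blast
    qed
    have "q \<in> F2 (tcomp (fst q) (snd q))"
      using qT Q'(3) by (simp add: F2_iff q_def qarity_def)
    moreover have "Q = (pi (fst q), map pi (snd q))"
    proof -
      have "map (pi \<circ> qrep) (snd Q) = snd Q" by (rule map_idI) (use Q'(2) pi_qrep in auto)
      then show ?thesis using Q'(1) pi_qrep by (simp add: q_def prod_eq_iff)
    qed
    ultimately show "Q \<in> (\<lambda>q. (pi (fst q), map pi (snd q))) ` (\<Union>t\<in>x. F2 t)"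
      using tx by blast
  qed
  moreover have "finite (\<Union>t\<in>x. F2 t)" using class_finite[OF x] finite_F2 by blast
  ultimately show ?thesis using finite_subset by blast
qed

lemma rd_map: "set l \<subseteq> TT \<Longrightarrow> rd e1 (map pi l) = map pi (rd Bot l)"
  by (induction l) (auto simp: rd_def pi_e1_iff)

lemma rd_RF: "set l \<subseteq> TT \<Longrightarrow> rd Bot l \<in> RF"
  by (auto simp: rd_def RF_iff)

lemma fill_inv: "set ss \<subseteq> TT \<Longrightarrow> fill e1 (map pi ss) (rd Bot ss) = ss"
  by (induction ss) (auto simp: rd_def pi_e1_iff)

lemma fill_map: "rd e1 Ys = map pi h \<Longrightarrow> map pi (fill e1 Ys h) = Ys"
proof (induction Ys arbitrary: h)
  case Nil
  then show ?case by simp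
next
  case (Cons Y Ys)
  show ?case
  proof (cases "Y = e1")
    case True
    then show ?thesis using Cons by (simp add: rd_def)
  next
    case False
    with Cons.prems obtain h1 h' where h: "h = h1 # h'" "pi h1 = Y" "rd e1 Ys = map pi h'"
      by (cases h) (auto simp: rd_def)
    then show ?thesis using Cons.IH[of h'] False by simp
  qed
qed

lemma fill_rd: "rd e1 Ys = map pi h \<Longrightarrow> Bot \<notin> set h \<Longrightarrow> rd Bot (fill e1 Ys h) = h"
proof (induction Ys arbitrary: h)
  case Nil
  then show ?case by (simp add: rd_def)
next
  case (Cons Y Ys)
  show ?case
  proof (cases "Y = e1")
    case True
    then show ?thesis using Cons by (simp add: rd_def)
  next
    case False
    with Cons.prems obtain h1 h' where h: "h = h1 # h'" "pi h1 = Y" "rd e1 Ys = map pi h'"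
      by (cases h) (auto simp: rd_def)
    then show ?thesis using Cons.IH[of h'] Cons.prems(2) False by (auto simp: rd_def)
  qed
qed

end

context qset begin

lemma letter:
  assumes x: "x \<in> C1"
  shows "(\<lambda>p. \<Sum>t\<in>x. (Delta_gen TT tarity tcomp Bot t p :: 'k::comm_ring_1)) = Psi (Delta_gen C1 qarity (qcomp R) e1 x)"
proof
  fix p :: "'f sterm list \<times> 'f sterm list"
  obtain g h where p: "p = (g, h)" by (cases p)
  let ?pr2 = "\<lambda>q. (rd Bot [fst q], rd Bot (snd q))"
  let ?pr1 = "\<lambda>Q. (rd e1 [fst Q], rd e1 (snd Q))"
  define SL where "SL = {z \<in> Sigma x F2. ?pr2 (snd z) = p}"
  define SR where "SR = {Q \<in> F1 x. ?pr1 Q = (map pi g, map pi h)}"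
  have fx: "finite x" using class_finite[OF x] .
  have xT: "x \<subseteq> TT" using class_sub[OF x] .
  have L: "(\<Sum>t\<in>x. (Delta_gen TT tarity tcomp Bot t p :: 'k)) = (\<Sum>z\<in>SL. 1)"
  proof -
    have "(\<Sum>t\<in>x. (Delta_gen TT tarity tcomp Bot t p :: 'k)) = (\<Sum>t\<in>x. \<Sum>q\<in>F2 t. if ?pr2 q = p then 1 else 0)"
      by (simp add: Delta_gen_def)
    also have "\<dots> = (\<Sum>z\<in>Sigma x F2. if ?pr2 (snd z) = p then 1 else 0)"
      using fx finite_F2 by (subst sum.Sigma) (auto simp: case_prod_beta)
    also have "\<dots> = (\<Sum>z\<in>SL. 1)"
      unfolding SL_def using fx finite_F2 by (subst sum.inter_filter) auto
    finally show ?thesis .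
  qed
  have Rt: "(Delta_gen C1 qarity (qcomp R) e1 x (map pi g, map pi h) :: 'k) = (\<Sum>Q\<in>SR. 1)"
  proof -
    have "(Delta_gen C1 qarity (qcomp R) e1 x (map pi g, map pi h) :: 'k) = (\<Sum>Q\<in>F1 x. if ?pr1 Q = (map pi g, map pi h) then 1 else 0)"
      by (simp add: Delta_gen_def)
    also have "\<dots> = (\<Sum>Q\<in>SR. 1)"
      unfolding SR_def using finite_F1[OF x] by (subst sum.inter_filter) auto
    finally show ?thesis .
  qed
  have SLd: "z \<in> SL \<Longrightarrow> fst z \<in> x \<and> fst (snd z) \<in> TT \<and> set (snd (snd z)) \<subseteq> TT \<and>
      length (snd (snd z)) = tarity (fst (snd z)) \<and> tcomp (fst (snd z)) (snd (snd z)) = fst z \<and>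
      rd Bot [fst (snd z)] = g \<and> rd Bot (snd (snd z)) = h" for z
    by (auto simp: SL_def F2_iff p)
  show "(\<Sum>t\<in>x. (Delta_gen TT tarity tcomp Bot t p :: 'k)) = Psi (Delta_gen C1 qarity (qcomp R) e1 x) p"
  proof (cases "g \<in> RF \<and> h \<in> RF")
    case False
    have "SL = {}"
    proof (rule ccontr)
      assume "SL \<noteq> {}"
      then obtain z where z: "z \<in> SL" by blast
      have "[fst (snd z)] \<in> RF \<or> fst (snd z) = Bot"
        using SLd[OF z] by (auto simp: RF_iff)
      then have "g \<in> RF" using SLd[OF z] rd_RF[of "[fst (snd z)]"] by auto
      moreover have "h \<in> RF" using SLd[OF z] rd_RF[of "snd (snd z)"] by auto
      ultimately show False using False by simp
    qed
    then show ?thesis using L False p unfolding Psi_def by auto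
  next
    case True
    have gT: "set g \<subseteq> TT" "Bot \<notin> set g" "set h \<subseteq> TT" "Bot \<notin> set h"
      using True by (auto simp: RF_iff)
    define sof where "sof Q = (if fst Q = e1 then Bot else hd g)" for Q :: "'f sterm set \<times> 'f sterm set list"
    have "(\<Sum>z\<in>SL. (1::'k)) = (\<Sum>Q\<in>SR. 1)"
    proof (rule sum.reindex_bij_witness[of _
          "\<lambda>Q. (tcomp (sof Q) (fill e1 (snd Q) h), (sof Q, fill e1 (snd Q) h))"
          "\<lambda>z. (pi (fst (snd z)), map pi (snd (snd z)))"])
      fix z assume z: "z \<in> SL"
      obtain t s ss where zz: "z = (t, (s, ss))" by (cases z) auto
      have d: "t \<in> x" "s \<in> TT" "set ss \<subseteq> TT" "length ss = tarity s" "tcomp s ss = t"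
          "rd Bot [s] = g" "rd Bot ss = h"
        using SLd[OF z] zz by auto
      have s_eq: "sof (pi s, map pi ss) = s"
      proof (cases "pi s = e1")
        case True
        then show ?thesis using d(2) pi_e1_iff by (simp add: sof_def)
      next
        case False
        then have "s \<noteq> Bot" by auto
        then have "g = [s]" using d(6) by (simp add: rd_def)
        then show ?thesis using False by (simp add: sof_def)
      qed
      have f_eq: "fill e1 (map pi ss) h = ss" using fill_inv[OF d(3)] d(7) by simp
      show "(tcomp (sof (pi (fst (snd z)), map pi (snd (snd z)))) (fill e1 (snd (pi (fst (snd z)), map pi (snd (snd z)))) h),
             (sof (pi (fst (snd z)), map pi (snd (snd z))), fill e1 (snd (pi (fst (snd z)), map pi (snd (snd z)))) h)) = z"
        using s_eq f_eq d zz by simp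
      have sin: "s \<in> pi s" using in_pi[OF d(2)] .
      have qa: "length (map pi ss) = qarity (pi s)"
        using qarity_eq[OF pi_C1[OF d(2)] sin] d(4) by simp
      have la: "list_all2 (\<in>) ss (map pi ss)"
        using d(3) by (auto simp: list_all2_map2 intro!: list.rel_refl_strong in_pi)
      have pC: "set (map pi ss) \<subseteq> C1" using d(3) by auto
      have qc: "qcomp R (pi s) (map pi ss) = x"
        using qcomp_eq[OF pi_C1[OF d(2)] pC qa sin la] d(5) class_eq[OF x d(1)] by simp
      have r1: "rd e1 [pi s] = map pi g" using rd_map[of "[s]"] d(2) d(6) by simp
      have r2: "rd e1 (map pi ss) = map pi h" using rd_map[OF d(3)] d(7) by simp
      show "(pi (fst (snd z)), map pi (snd (snd z))) \<in> SR"
        unfolding SR_def using zz pi_C1[OF d(2)] pC qa qc r1 r2 by (simp add: F1_iff)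
      show "(1::'k) = 1" by simp
    next
      fix Q assume Q: "Q \<in> SR"
      obtain Y Ys where QQ: "Q = (Y, Ys)" by (cases Q)
      have d: "Y \<in> C1" "set Ys \<subseteq> C1" "length Ys = qarity Y" "qcomp R Y Ys = x"
          "rd e1 [Y] = map pi g" "rd e1 Ys = map pi h"
        using Q QQ by (auto simp: SR_def F1_iff)
      define s where "s = sof Q"
      define ss where "ss = fill e1 Ys h"
      have sprop: "s \<in> TT \<and> pi s = Y \<and> rd Bot [s] = g"
      proof (cases "Y = e1")
        case True
        then have "g = []" using d(5) by (simp add: rd_def)
        then show ?thesis using True by (simp add: s_def sof_def QQ rd_def)
      next
        case False
        then have "map pi g = [Y]" using d(5) by (simp add: rd_def)
        then obtain g1 where g1: "g = [g1]" "pi g1 = Y" by (cases g) auto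
        then have "g1 \<in> TT" "g1 \<noteq> Bot" using gT by auto
        then show ?thesis using False g1 by (simp add: s_def sof_def QQ rd_def)
      qed
      have ssm: "map pi ss = Ys" unfolding ss_def using fill_map[OF d(6)] .
      have ssr: "rd Bot ss = h" unfolding ss_def using fill_rd[OF d(6) gT(4)] .
      have ssT: "set ss \<subseteq> TT"
      proof -
        have "length (filter (\<lambda>Y. Y \<noteq> e1) Ys) = length h"
          using arg_cong[OF d(6), of length] by (simp add: rd_def)
        then have "set ss \<subseteq> insert Bot (set h)" unfolding ss_def by (rule set_fill)
        then show ?thesis using gT by auto
      qed
      have sY: "s \<in> Y" using sprop in_pi by blast
      have ls: "length ss = tarity s" using d(3) qarity_eq[OF d(1) sY] by (simp add: ss_def)
      have la: "list_all2 (\<in>) ss Ys"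
        using ssT ssm[symmetric] by (auto simp: list_all2_map2 intro!: list.rel_refl_strong in_pi)
      have tx: "tcomp s ss \<in> x"
      proof -
        have "pi (tcomp s ss) = x" using qcomp_eq[OF d(1) d(2) d(3) sY la] d(4) by simp
        moreover have "tcomp s ss \<in> TT" using sprop ssT by blast
        ultimately show ?thesis using in_pi by blast
      qed
      show "(pi (fst (snd (tcomp (sof Q) (fill e1 (snd Q) h), sof Q, fill e1 (snd Q) h))),
             map pi (snd (snd (tcomp (sof Q) (fill e1 (snd Q) h), sof Q, fill e1 (snd Q) h)))) = Q"
        using sprop ssm QQ by (simp add: s_def ss_def)
      show "(tcomp (sof Q) (fill e1 (snd Q) h), sof Q, fill e1 (snd Q) h) \<in> SL"
        unfolding SL_def using tx sprop ssT ls ssr QQ p by (simp add: s_def ss_def F2_iff)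
    qed
    moreover have "Psi (Delta_gen C1 qarity (qcomp R) e1 x) p = (Delta_gen C1 qarity (qcomp R) e1 x (map pi g, map pi h) :: 'k)"
      using True p by (simp add: Psi_def)
    ultimately show ?thesis using L Rt by simp
  qed
qed

end

lemma finite_supp_Dg: "finite (supp (Delta_gen C ar cp e x :: _ \<Rightarrow> 'k::comm_ring_1))"
  unfolding Delta_gen_def by (rule finite_supp_ind)

lemma finite_supp_Dw: "finite (supp (Delta_word C ar cp e w :: _ \<Rightarrow> 'k::comm_ring_1))"
proof (induction w)
  case Nil
  then show ?case by (simp add: Delta_word_def)
next
  case (Cons x w)
  then show ?case
    by (simp add: Delta_word_def finite_supp_Tmult finite_supp_Dg[unfolded Delta_word_def])
qed

lemma Delta_word_Cons: "Delta_word C ar cp e (x # w) = Tmult (Delta_gen C ar cp e x) (Delta_word C ar cp e w)"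
  by (simp add: Delta_word_def)

context qset begin

lemma word:
  assumes w: "w \<in> red_words C1 e1"
  shows "(\<lambda>p. \<Sum>f\<in>FF w. (Delta_word TT tarity tcomp Bot f p :: 'k::comm_ring_1)) = Psi (Delta_word C1 qarity (qcomp R) e1 w)"
  using w
proof (induction w)
  case Nil
  have FF0: "FF [] = {[]}"
    by (auto simp: fib_iff RF_iff)
  show ?case
  proof
    fix p :: "'f sterm list \<times> 'f sterm list"
    have "[] \<in> RF" by (simp add: RF_iff)
    then show "(\<Sum>f\<in>FF []. (Delta_word TT tarity tcomp Bot f p :: 'k)) = Psi (Delta_word C1 qarity (qcomp R) e1 []) p"
      using FF0 by (cases p) (auto simp: Delta_word_def Psi_def basis_def)
  qed
next
  case (Cons x w)
  have x: "x \<in> C1" "x \<noteq> e1" and w: "w \<in> red_words C1 e1" using Cons.prems by (auto simp: red_words_def)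
  note IH = Cons.IH[OF w]
  have FFc: "FF (x # w) = (\<lambda>z. fst z # snd z) ` (x \<times> FF w)"
  proof (intro set_eqI iffI)
    fix f' assume "f' \<in> FF (x # w)"
    then have f': "f' \<in> RF" "map pi f' = x # w" by (auto simp: fib_iff)
    then obtain t f where tf: "f' = t # f" "pi t = x" "map pi f = w" by auto
    have "t \<in> TT" "f \<in> RF" using f' tf by (auto simp: RF_iff)
    then have "t \<in> x" "f \<in> FF w" using tf in_pi by (auto simp: fib_iff)
    then show "f' \<in> (\<lambda>z. fst z # snd z) ` (x \<times> FF w)" using tf by force
  next
    fix f' assume "f' \<in> (\<lambda>z. fst z # snd z) ` (x \<times> FF w)"
    then obtain t f where tf: "f' = t # f" "t \<in> x" "f \<in> FF w" by auto
    have tT: "t \<in> TT" using class_sub[OF x(1)] tf by auto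
    have pt: "pi t = x" using class_eq[OF x(1) tf(2)] .
    have "t \<noteq> Bot" using pt x(2) by auto
    then show "f' \<in> FF (x # w)" using tf tT pt by (auto simp: fib_iff RF_iff)
  qed
  have inj: "inj_on (\<lambda>z. fst z # snd z) (x \<times> FF w)" by (auto simp: inj_on_def prod_eq_iff)
  show ?case
  proof
    fix p :: "'f sterm list \<times> 'f sterm list"
    have "(\<Sum>f\<in>FF (x # w). (Delta_word TT tarity tcomp Bot f p :: 'k))
        = (\<Sum>z\<in>x \<times> FF w. (Delta_word TT tarity tcomp Bot (fst z # snd z) p :: 'k))"
      unfolding FFc using inj by (simp add: sum.reindex)
    also have "\<dots> = (\<Sum>t\<in>x. \<Sum>f\<in>FF w. Tmult (Delta_gen TT tarity tcomp Bot t) (Delta_word TT tarity tcomp Bot f) p :: 'k)"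
      by (simp add: sum.cartesian_product Delta_word_Cons case_prod_beta)
    also have "\<dots> = Tmult (\<lambda>p. \<Sum>t\<in>x. (Delta_gen TT tarity tcomp Bot t p :: 'k)) (\<lambda>p. \<Sum>f\<in>FF w. Delta_word TT tarity tcomp Bot f p) p"
      by (rule Tmult_sum[symmetric]) (auto simp: class_finite[OF x(1)] finite_fib finite_supp_Dg finite_supp_Dw)
    also have "\<dots> = Tmult (Psi (Delta_gen C1 qarity (qcomp R) e1 x)) (Psi (Delta_word C1 qarity (qcomp R) e1 w)) p"
      using letter[OF x(1), where 'k='k] IH by simp
    also have "\<dots> = Psi (Delta_word C1 qarity (qcomp R) e1 (x # w)) p"
      by (simp add: Tmult_Psi finite_supp_Dg finite_supp_Dw Delta_word_Cons)
    finally show "(\<Sum>f\<in>FF (x # w). (Delta_word TT tarity tcomp Bot f p :: 'k)) = Psi (Delta_word C1 qarity (qcomp R) e1 (x # w)) p" .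
  qed
qed

end

context qset begin

lemma Nspace_iff: "a \<in> Nspace C e \<longleftrightarrow> finite (supp a) \<and> supp a \<subseteq> red_words C e"
  by (simp add: Nspace_def)

lemma supp_Phi_eq: "supp (Phi a) = (\<Union>u\<in>supp a. FF u)"
  by (auto simp: supp_def Phi_def fib_iff)

lemma main:
  shows "(\<forall>x \<in> red_words C1 e1. finite (FF x))
     \<and> N_hopf_morphism C1 qarity (qcomp R) e1 TT tarity tcomp Bot
                       (phi S ar R :: ('f sterm set list \<Rightarrow> 'k::field) \<Rightarrow> _)
     \<and> inj_on (phi S ar R :: ('f sterm set list \<Rightarrow> 'k::field) \<Rightarrow> _) (Nspace C1 e1)"
proof (intro conjI)
  show "\<forall>x \<in> red_words C1 e1. finite (FF x)" using finite_fib by blast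
next
  let ?phi = "phi S ar R :: ('f sterm set list \<Rightarrow> 'k::field) \<Rightarrow> _"
  have pe: "finite (supp a) \<Longrightarrow> ?phi a = Phi a" for a :: "'f sterm set list \<Rightarrow> 'k"
    by (rule phi_eq)
  show "N_hopf_morphism C1 qarity (qcomp R) e1 TT tarity tcomp Bot ?phi"
    unfolding N_hopf_morphism_def
  proof (intro conjI ballI allI)
    fix a :: "'f sterm set list \<Rightarrow> 'k" assume a: "a \<in> Nspace C1 e1"
    then have fa: "finite (supp a)" by (simp add: Nspace_iff)
    have "supp (Phi a) \<subseteq> RF" by (auto simp: supp_def Phi_def)
    then show "?phi a \<in> Nspace TT Bot"
      using finite_supp_Phi[OF fa] pe[OF fa] by (simp add: Nspace_iff)
  next
    fix a b :: "'f sterm set list \<Rightarrow> 'k" assume a: "a \<in> Nspace C1 e1" and b: "b \<in> Nspace C1 e1"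
    then have fa: "finite (supp a)" and fb: "finite (supp b)" by (simp_all add: Nspace_iff)
    have "supp (\<lambda>w. a w + b w) \<subseteq> supp a \<union> supp b" by (auto simp: supp_def)
    then have fab: "finite (supp (\<lambda>w. a w + b w))" using fa fb finite_subset by blast
    show "?phi (\<lambda>w. a w + b w) = (\<lambda>w. ?phi a w + ?phi b w)"
      using pe[OF fab] pe[OF fa] pe[OF fb] by (auto simp: Phi_def)
  next
    fix a :: "'f sterm set list \<Rightarrow> 'k" and c assume a: "a \<in> Nspace C1 e1"
    then have fa: "finite (supp a)" by (simp add: Nspace_iff)
    have "supp (\<lambda>w. c * a w) \<subseteq> supp a" by (auto simp: supp_def)
    then have fca: "finite (supp (\<lambda>w. c * a w))" using fa finite_subset by blast
    show "?phi (\<lambda>w. c * a w) = (\<lambda>w. c * ?phi a w)"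
      using pe[OF fca] pe[OF fa] by (auto simp: Phi_def)
  next
    fix a b :: "'f sterm set list \<Rightarrow> 'k" assume a: "a \<in> Nspace C1 e1" and b: "b \<in> Nspace C1 e1"
    then have fa: "finite (supp a)" and fb: "finite (supp b)" by (simp_all add: Nspace_iff)
    show "?phi (Nmult a b) = Nmult (?phi a) (?phi b)"
      using pe[OF finite_supp_Nmult[OF fa fb]] pe[OF fa] pe[OF fb] Nmult_Phi[OF fa fb] by simp
  next
    have "[] \<in> RF" by (simp add: RF_iff)
    then have "Phi (basis [] :: _ \<Rightarrow> 'k) = basis []" by (auto simp: Phi_def basis_def)
    moreover have "?phi (basis []) = Phi (basis [])" by (rule pe) simp
    ultimately show "?phi Nunit = Nunit" by (simp add: Nunit_def)
  next
    fix a :: "'f sterm set list \<Rightarrow> 'k" assume a: "a \<in> Nspace C1 e1"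
    then have fa: "finite (supp a)" and sa: "supp a \<subseteq> red_words C1 e1" by (simp_all add: Nspace_iff)
    let ?Dw1 = "Delta_word C1 qarity (qcomp R) e1 :: _ \<Rightarrow> _ \<Rightarrow> 'k"
    let ?Dw2 = "Delta_word TT tarity tcomp Bot :: _ \<Rightarrow> _ \<Rightarrow> 'k"
    have fT: "finite (supp (Ncoprod C1 qarity (qcomp R) e1 a))"
      unfolding Ncoprod_def lin_ext_def
    proof (rule finite_supp_sum[OF fa])
      fix u
      have "supp (\<lambda>v. a u * ?Dw1 u v) \<subseteq> supp (?Dw1 u)" by (auto simp: supp_def)
      then show "finite (supp (\<lambda>v. a u * ?Dw1 u v))" by (rule finite_subset[OF _ finite_supp_Dw])
    qed
    show "Ncoprod TT tarity tcomp Bot (?phi a) = tensor_map ?phi ?phi (Ncoprod C1 qarity (qcomp R) e1 a)"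
    proof
      fix p :: "'f sterm list \<times> 'f sterm list"
      have "Ncoprod TT tarity tcomp Bot (?phi a) p = (\<Sum>f\<in>supp (Phi a). Phi a f * ?Dw2 f p)"
        unfolding Ncoprod_def lin_ext_def pe[OF fa] by simp
      also have "\<dots> = (\<Sum>w\<in>supp a. \<Sum>f\<in>FF w. Phi a f * ?Dw2 f p)"
        unfolding supp_Phi_eq
        by (rule sum.UNION_disjoint[OF fa]) (auto simp: finite_fib fib_iff)
      also have "\<dots> = (\<Sum>w\<in>supp a. a w * (\<Sum>f\<in>FF w. ?Dw2 f p))"
      proof (intro sum.cong refl)
        fix w assume "w \<in> supp a"
        have "(\<Sum>f\<in>FF w. Phi a f * ?Dw2 f p) = (\<Sum>f\<in>FF w. a w * ?Dw2 f p)"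
        proof (rule sum.cong[OF refl])
          fix f assume "f \<in> FF w"
          then have "Phi a f = a w" by (simp add: fib_iff Phi_def)
          then show "Phi a f * ?Dw2 f p = a w * ?Dw2 f p" by simp
        qed
        also have "\<dots> = a w * (\<Sum>f\<in>FF w. ?Dw2 f p)" by (rule sum_distrib_left[symmetric])
        finally show "(\<Sum>f\<in>FF w. Phi a f * ?Dw2 f p) = a w * (\<Sum>f\<in>FF w. ?Dw2 f p)" .
      qed
      also have "\<dots> = (\<Sum>w\<in>supp a. a w * Psi (?Dw1 w) p)"
      proof (intro sum.cong refl)
        fix w assume "w \<in> supp a"
        then have "w \<in> red_words C1 e1" using sa by blast
        have "(\<Sum>f\<in>FF w. ?Dw2 f p) = Psi (?Dw1 w) p"
          using fun_cong[OF word[OF \<open>w \<in> red_words C1 e1\<close>, where 'k='k], of p] by simp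
        then show "a w * (\<Sum>f\<in>FF w. ?Dw2 f p) = a w * Psi (?Dw1 w) p" by simp
      qed
      also have "\<dots> = Psi (Ncoprod C1 qarity (qcomp R) e1 a) p"
      proof (cases "fst p \<in> RF \<and> snd p \<in> RF")
        case True
        then show ?thesis unfolding Psi_def Ncoprod_def lin_ext_def by simp
      next
        case False
        then have "\<And>w. Psi (?Dw1 w) p = 0" "Psi (Ncoprod C1 qarity (qcomp R) e1 a) p = 0"
          unfolding Psi_def by auto
        then show ?thesis by simp
      qed
      also have "\<dots> = tensor_map ?phi ?phi (Ncoprod C1 qarity (qcomp R) e1 a) p"
        using tensor_map_phi[OF fT] by simp
      finally show "Ncoprod TT tarity tcomp Bot (?phi a) p = tensor_map ?phi ?phi (Ncoprod C1 qarity (qcomp R) e1 a) p" .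
    qed
  next
    fix a :: "'f sterm set list \<Rightarrow> 'k" assume a: "a \<in> Nspace C1 e1"
    then have fa: "finite (supp a)" by (simp add: Nspace_iff)
    have "[] \<in> RF" by (simp add: RF_iff)
    then show "Ncounit (?phi a) = Ncounit a"
      using pe[OF fa] by (simp add: Ncounit_def Phi_def)
  qed
next
  let ?phi = "phi S ar R :: ('f sterm set list \<Rightarrow> 'k::field) \<Rightarrow> _"
  show "inj_on ?phi (Nspace C1 e1)"
  proof (rule inj_onI)
    fix a b :: "'f sterm set list \<Rightarrow> 'k"
    assume a: "a \<in> Nspace C1 e1" and b: "b \<in> Nspace C1 e1" and e: "?phi a = ?phi b"
    then have fa: "finite (supp a)" and fb: "finite (supp b)"
      and sa: "supp a \<subseteq> red_words C1 e1" and sb: "supp b \<subseteq> red_words C1 e1"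
      by (simp_all add: Nspace_iff)
    have PP: "Phi a = Phi b" using e phi_eq[OF fa] phi_eq[OF fb] by simp
    show "a = b"
    proof
      fix w
      show "a w = b w"
      proof (cases "w \<in> red_words C1 e1")
        case True
        then have w: "set w \<subseteq> C1" "e1 \<notin> set w" by (auto simp: red_words_def)
        define f where "f = map qrep w"
        have fRF: "f \<in> RF"
        proof -
          have "set f \<subseteq> TT"
          proof
            fix t assume "t \<in> set f"
            then obtain X where X: "X \<in> set w" "t = qrep X" by (auto simp: f_def)
            then have "X \<in> C1" using w(1) by blast
            then show "t \<in> TT" using class_sub[OF \<open>X \<in> C1\<close>] qrep_in[OF \<open>X \<in> C1\<close>] X(2) by auto
          qed
          moreover have "Bot \<notin> set f"
          proof
            assume "Bot \<in> set f"
            then obtain X where "X \<in> set w" "qrep X = Bot" by (auto simp: f_def)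
            then have XC: "X \<in> C1" "qrep X = Bot" using w(1) by blast+
            then have "X = e1" using pi_qrep[OF XC(1)] by simp
            then show False using w(2) \<open>X \<in> set w\<close> by simp
          qed
          ultimately show ?thesis by (simp add: RF_iff)
        qed
        have mf: "map pi f = w"
        proof -
          have "map (pi \<circ> qrep) w = w"
          proof (rule map_idI)
            fix X assume "X \<in> set w"
            then have "X \<in> C1" using w(1) by blast
            then show "(pi \<circ> qrep) X = X" using pi_qrep by simp
          qed
          then show ?thesis by (simp add: f_def)
        qed
        have "Phi a f = Phi b f" using PP by simp
        then show ?thesis using fRF mf by (simp add: Phi_def)
      next
        case False
        then have "a w = 0" "b w = 0" using sa sb by (auto simp: supp_def)
        then show ?thesis by simp
      qed
    qed
  qed
qed

end

theorem theorem3p5: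
  fixes S :: "'f set" and ar :: "'f \<Rightarrow> nat" and R :: "('f sterm \<times> 'f sterm) set"
  assumes "operad_congruence S ar R"
    and "degree_compatible R"
    and "finite_type S ar R"
  shows "(\<forall>x \<in> red_words (terms S ar // R) (qproj R Bot). finite (fiber_forests S ar R x))
     \<and> N_hopf_morphism (terms S ar // R) qarity (qcomp R) (qproj R Bot)
                       (terms S ar) tarity tcomp Bot
                       (phi S ar R :: ('f sterm set list \<Rightarrow> 'k::field_char_0) \<Rightarrow> _)
     \<and> inj_on (phi S ar R :: ('f sterm set list \<Rightarrow> 'k::field_char_0) \<Rightarrow> _)
              (Nspace (terms S ar // R) (qproj R Bot))"
proof -
  interpret qset S ar R using assms by (unfold_locales)
  show ?thesis by (rule main)
qed


end
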